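(* Let $G$ be a progressive graph and let $\phi$ be an upward BP-embedding of $G$. Then the linear order $\prec_\phi$ on $E(G)$ obtained from any layer decomposition of $\phi$ (as described in the context) is a planar order on $G$.
   Context: A progressive graph is a finite directed acyclic graph (parallel edges allowed) in which every source and every sink has degree one. Degree-one vertices are boundary vertices, the others internal vertices. An input edge is an edge whose initial vertex is a boundary vertex; an output edge is one whose terminal vertex is a boundary vertex. For edges write $e\to e'$ if $e\neq e'$ and there is a directed path whose first edge is $e$ and last edge is $e'$. For a vertex $v$, $I(v)$, $O(v)$ are its sets of incoming and outgoing edges. A planar order on $G$ is a linear order $\prec$ on $E(G)$ such that (P1) $e_1\to e_2$ implies $e_1\prec e_2$; (P2) if $e_1\prec e_2\prec e_3$ and $e_1\to e_3$, then $e_1\to e_2$ or $e_2\to e_3$. A POP-graph is a progressive graph with a planar order. Composition: let $(G_1,\prec_1)$, $(G_2,\prec_2)$ be progressive graphs with linear orders on their edges, where $G_1$ has output edges $o_1\prec_1\cdots\prec_1 o_n$ and $G_2$ has input edges $i_1\prec_2\cdots\prec_2 i_n$. The graph $G_2\circ G_1$ is obtained from $G_1\sqcup G_2$ by deleting the sinks of $G_1$, the sources of $G_2$ and the edges $o_k,i_k$, and adding for each $k$ a new edge $\overline{e_k}$ from the initial vertex of $o_k$ to the terminal vertex of $i_k$. Let $Q_1=\{e: e\prec_1 o_1\}$, $Q_k=\{e: o_{k-1}\prec_1 e\prec_1 o_k\}$ ($2\le k\le n$), $P_k=\{e: i_k\prec_2 e\prec_2 i_{k+1}\}$ ($1\le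 k\le n-1$), $P_n=\{e: i_n\prec_2 e\}$. Then $\prec_2\circ\prec_1$ is the linear order on $E(G_2\circ G_1)$ listing $Q_1,\{\overline{e_1}\},P_1,Q_2,\{\overline{e_2}\},P_2,\dots,Q_n,\{\overline{e_n}\},P_n$ consecutively, each $Q_k$ ordered by $\prec_1$ and each $P_k$ by $\prec_2$. A BP-embedding of $G$ is an embedding of $G$ into a closed rectangle $R=[a,b]\times[c,d]\subset\mathbb{R}^2$ (vertices to distinct points, edges to simple arcs meeting only at common endpoints) such that all sources lie on the top side $y=d$, all sinks on the bottom side $y=c$, and everything else lies in the interior of $R$. It is upward if the $y$-coordinate strictly decreases along every edge from its initial to its terminal vertex. $G$ is elementary if each connected component has at most one internal vertex. Canonical order for elementary $G$ with upward BP-embedding $\phi$: each component is a single edge or a star with one internal vertex $v$ (edges $I(v)\cup O(v)$); $\prec_\phi$ lists the components from left to right, and within a star lists the edges of $I(v)$ from left to right followed by the edges of $O(v)$ from left to right. Layer decomposition of an arbitrary upward BP-embedding $\phi$ of $G$: choose heights $d=y_0>y_1>\cdots>y_n=c$ with no vertex on the lines $y=y_j$ ($0<j<n$) and at most one internal vertex in each strip $y_{j-1}\ge y\ge y_j$; cutting every edge at its crossings with these lines (adding boundary vertices there) exhibits $\phi$ as a vertical stack of elementary upward BP-embeddings $\phi_1$ (top) ,\dots,$\phi_n$ (bottom) of elementary progressive graphs $G_1,\dots,G_n$ with $G=G_n\circ\cdots\circ G_1$ (outputs of $G_j$ matched left to right with inputs of $G_{j+1}$). Then $\prec_\phi:=\prec_{\phi_n}\circ\cdots\circ\prec_{\phi_1}$,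 viewed as an order on $E(G)$. *)

theory Defs
  imports "HOL-Analysis.Analysis"
begin

section \<open>Progressive graphs\<close>

record ('v, 'e) pgraph =
  verts :: "'v set"
  edges :: "'e set"
  src :: "'e \<Rightarrow> 'v"
  tgt :: "'e \<Rightarrow> 'v"

definition indeg :: "('v, 'e) pgraph \<Rightarrow> 'v \<Rightarrow> nat" where
  "indeg G v = card {e \<in> edges G. tgt G e = v}"

definition outdeg :: "('v, 'e) pgraph \<Rightarrow> 'v \<Rightarrow> nat" where
  "outdeg G v = card {e \<in> edges G. src G e = v}"

definition degree :: "('v, 'e) pgraph \<Rightarrow> 'v \<Rightarrow> nat" where
  "degree G v = indeg G v + outdeg G v"

definition is_source :: "('v, 'e) pgraph \<Rightarrow> 'v \<Rightarrow> bool" where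
  "is_source G v \<longleftrightarrow> v \<in> verts G \<and> indeg G v = 0"

definition is_sink :: "('v, 'e) pgraph \<Rightarrow> 'v \<Rightarrow> bool" where
  "is_sink G v \<longleftrightarrow> v \<in> verts G \<and> outdeg G v = 0"

definition internal :: "('v, 'e) pgraph \<Rightarrow> 'v \<Rightarrow> bool" where
  "internal G v \<longleftrightarrow> v \<in> verts G \<and> degree G v \<noteq> 1"

definition is_epath :: "('v, 'e) pgraph \<Rightarrow> 'e list \<Rightarrow> bool" where
  "is_epath G es \<longleftrightarrow> es \<noteq> [] \<and> set es \<subseteq> edges G \<and>
     (\<forall>i. Suc i < length es \<longrightarrow> tgt G (es ! i) = src G (es ! Suc i))"

definition acyclic_pg :: "('v, 'e) pgraph \<Rightarrow> bool" where
  "acyclic_pg G \<longleftrightarrow> \<not> (\<exists>es. is_epath G es \<and> tgt G (last es) = src G (hd es))"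

definition progressive_graph :: "('v, 'e) pgraph \<Rightarrow> bool" where
  "progressive_graph G \<longleftrightarrow>
     finite (verts G) \<and> finite (edges G) \<and>
     (\<forall>e \<in> edges G. src G e \<in> verts G \<and> tgt G e \<in> verts G) \<and>
     acyclic_pg G \<and>
     (\<forall>v. is_source G v \<longrightarrow> degree G v = 1) \<and>
     (\<forall>v. is_sink G v \<longrightarrow> degree G v = 1)"

definition edge_reach :: "('v, 'e) pgraph \<Rightarrow> 'e \<Rightarrow> 'e \<Rightarrow> bool" where
  "edge_reach G e e' \<longleftrightarrow> e \<noteq> e' \<and>
     (\<exists>es. is_epath G es \<and> hd es = e \<and> last es = e')"

section \<open>Planar orders (linear orders on a finite set represented as enumerating lists)\<close>

definition list_prec :: "'e list \<Rightarrow> 'e \<Rightarrow> 'e \<Rightarrow> bool" where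
  "list_prec L x y \<longleftrightarrow> (\<exists>i k. i < k \<and> k < length L \<and> L ! i = x \<and> L ! k = y)"

definition planar_order :: "('v, 'e) pgraph \<Rightarrow> 'e list \<Rightarrow> bool" where
  "planar_order G L \<longleftrightarrow>
     distinct L \<and> set L = edges G \<and>
     (\<forall>e1 e2. edge_reach G e1 e2 \<longrightarrow> list_prec L e1 e2) \<and>
     (\<forall>e1 e2 e3. list_prec L e1 e2 \<and> list_prec L e2 e3 \<and> edge_reach G e1 e3 \<longrightarrow>
        edge_reach G e1 e2 \<or> edge_reach G e2 e3)"

section \<open>Upward BP-embeddings\<close>

text \<open>Points of the plane are pairs (x, y). Vertices are placed by pV, edge e is
  drawn as the path pE e on [0,1] from its initial to its terminal vertex.
  The rectangle is [a,b] x [c,d].\<close>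
definition BP_embedding ::
  "('v, 'e) pgraph \<Rightarrow> ('v \<Rightarrow> real \<times> real) \<Rightarrow> ('e \<Rightarrow> real \<Rightarrow> real \<times> real)
    \<Rightarrow> real \<Rightarrow> real \<Rightarrow> real \<Rightarrow> real \<Rightarrow> bool" where
  "BP_embedding G pV pE a b c d \<longleftrightarrow>
     a < b \<and> c < d \<and>
     inj_on pV (verts G) \<and>
     (\<forall>e \<in> edges G. arc (pE e) \<and> pathstart (pE e) = pV (src G e) \<and>
                     pathfinish (pE e) = pV (tgt G e)) \<and>
     (\<forall>e \<in> edges G. \<forall>e' \<in> edges G. e \<noteq> e' \<longrightarrow>
        path_image (pE e) \<inter> path_image (pE e') \<subseteq>
          pV ` ({src G e, tgt G e} \<inter> {src G e', tgt G e'})) \<and>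
     (\<forall>e \<in> edges G. \<forall>v \<in> verts G. pV v \<in> path_image (pE e) \<longrightarrow>
        v = src G e \<or> v = tgt G e) \<and>
     (\<forall>v. is_source G v \<longrightarrow> snd (pV v) = d \<and> a \<le> fst (pV v) \<and> fst (pV v) \<le> b) \<and>
     (\<forall>v. is_sink G v \<longrightarrow> snd (pV v) = c \<and> a \<le> fst (pV v) \<and> fst (pV v) \<le> b) \<and>
     (\<forall>v. internal G v \<longrightarrow>
        a < fst (pV v) \<and> fst (pV v) < b \<and> c < snd (pV v) \<and> snd (pV v) < d) \<and>
     (\<forall>e \<in> edges G. \<forall>\<tau> \<in> {0<..<1}.
        a < fst (pE e \<tau>) \<and> fst (pE e \<tau>) < b \<and> c < snd (pE e \<tau>) \<and> snd (pE e \<tau>) < d)"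

definition upward_BP_embedding ::
  "('v, 'e) pgraph \<Rightarrow> ('v \<Rightarrow> real \<times> real) \<Rightarrow> ('e \<Rightarrow> real \<Rightarrow> real \<times> real)
    \<Rightarrow> real \<Rightarrow> real \<Rightarrow> real \<Rightarrow> real \<Rightarrow> bool" where
  "upward_BP_embedding G pV pE a b c d \<longleftrightarrow>
     BP_embedding G pV pE a b c d \<and>
     (\<forall>e \<in> edges G. \<forall>\<tau>1 \<tau>2. 0 \<le> \<tau>1 \<and> \<tau>1 < \<tau>2 \<and> \<tau>2 \<le> 1 \<longrightarrow>
        snd (pE e \<tau>2) < snd (pE e \<tau>1))"

section \<open>Layer decompositions\<close>

definition strip_internal ::
  "('v, 'e) pgraph \<Rightarrow> ('v \<Rightarrow> real \<times> real) \<Rightarrow> (nat \<Rightarrow> real) \<Rightarrow> nat \<Rightarrow> 'v set" where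
  "strip_internal G pV ys j =
     {v \<in> verts G. internal G v \<and> ys j \<le> snd (pV v) \<and> snd (pV v) \<le> ys (j - 1)}"

definition layer_decomposition ::
  "('v, 'e) pgraph \<Rightarrow> ('v \<Rightarrow> real \<times> real) \<Rightarrow> real \<Rightarrow> real \<Rightarrow> (nat \<Rightarrow> real) \<Rightarrow> nat \<Rightarrow> bool" where
  "layer_decomposition G pV c d ys n \<longleftrightarrow>
     ys 0 = d \<and> ys n = c \<and> (\<forall>j < n. ys (Suc j) < ys j) \<and>
     (\<forall>j. 0 < j \<and> j < n \<longrightarrow> (\<forall>v \<in> verts G. snd (pV v) \<noteq> ys j)) \<and>
     (\<forall>j \<in> {1..n}. card (strip_internal G pV ys j) \<le> 1)"

text \<open>Edges of G having a piece in strip j; the piece of e in strip j is an edge of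
  the layer graph G_j, identified with e.\<close>
definition layer_edges ::
  "('v, 'e) pgraph \<Rightarrow> ('v \<Rightarrow> real \<times> real) \<Rightarrow> (nat \<Rightarrow> real) \<Rightarrow> nat \<Rightarrow> 'e set" where
  "layer_edges G pV ys j =
     {e \<in> edges G. snd (pV (tgt G e)) < ys (j - 1) \<and> ys j < snd (pV (src G e))}"

definition layer_in ::
  "('v, 'e) pgraph \<Rightarrow> ('v \<Rightarrow> real \<times> real) \<Rightarrow> (nat \<Rightarrow> real) \<Rightarrow> nat \<Rightarrow> 'e \<Rightarrow> bool" where
  "layer_in G pV ys j e \<longleftrightarrow>
     e \<in> layer_edges G pV ys j \<and> src G e \<notin> strip_internal G pV ys j"

definition layer_out ::
  "('v, 'e) pgraph \<Rightarrow> ('v \<Rightarrow> real \<times> real) \<Rightarrow> (nat \<Rightarrow> real) \<Rightarrow> nat \<Rightarrow> 'e \<Rightarrow> bool" where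
  "layer_out G pV ys j e \<longleftrightarrow>
     e \<in> layer_edges G pV ys j \<and> tgt G e \<notin> strip_internal G pV ys j"

definition xat :: "('e \<Rightarrow> real \<Rightarrow> real \<times> real) \<Rightarrow> 'e \<Rightarrow> real \<Rightarrow> real" where
  "xat pE e h = fst (pE e (THE \<tau>. \<tau> \<in> {0..1} \<and> snd (pE e \<tau>) = h))"

text \<open>Height at which components of strip j are compared left to right:
  the height of the internal vertex if there is one, else the top line.\<close>
definition layer_height ::
  "('v, 'e) pgraph \<Rightarrow> ('v \<Rightarrow> real \<times> real) \<Rightarrow> (nat \<Rightarrow> real) \<Rightarrow> nat \<Rightarrow> real" where
  "layer_height G pV ys j =
     (if strip_internal G pV ys j = {} then ys (j - 1)
      else snd (pV (THE v. v \<in> strip_internal G pV ys j)))"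

text \<open>Sort key of the canonical order of the elementary layer G_j:
  (horizontal position of the component, 0 for I(v) / 1 for O(v),
   horizontal position inside the star).\<close>
definition canon_key ::
  "('v, 'e) pgraph \<Rightarrow> ('v \<Rightarrow> real \<times> real) \<Rightarrow> ('e \<Rightarrow> real \<Rightarrow> real \<times> real)
    \<Rightarrow> (nat \<Rightarrow> real) \<Rightarrow> nat \<Rightarrow> 'e \<Rightarrow> real \<times> nat \<times> real" where
  "canon_key G pV pE ys j e =
     (if tgt G e \<in> strip_internal G pV ys j
      then (fst (pV (tgt G e)), 0, xat pE e (ys (j - 1)))
      else if src G e \<in> strip_internal G pV ys j
      then (fst (pV (src G e)), 1, xat pE e (ys j))
      else (xat pE e (layer_height G pV ys j), 0, 0))"

definition lex_less :: "real \<times> nat \<times> real \<Rightarrow> real \<times> nat \<times> real \<Rightarrow> bool" where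
  "lex_less k1 k2 \<longleftrightarrow>
     (case k1 of (x1, r1, z1) \<Rightarrow> case k2 of (x2, r2, z2) \<Rightarrow>
        x1 < x2 \<or> (x1 = x2 \<and> (r1 < r2 \<or> (r1 = r2 \<and> z1 < z2))))"

definition canonical_layer_order ::
  "('v, 'e) pgraph \<Rightarrow> ('v \<Rightarrow> real \<times> real) \<Rightarrow> ('e \<Rightarrow> real \<Rightarrow> real \<times> real)
    \<Rightarrow> (nat \<Rightarrow> real) \<Rightarrow> nat \<Rightarrow> 'e list \<Rightarrow> bool" where
  "canonical_layer_order G pV pE ys j L \<longleftrightarrow>
     distinct L \<and> set L = layer_edges G pV ys j \<and>
     sorted_wrt (\<lambda>e f. lex_less (canon_key G pV pE ys j e) (canon_key G pV pE ys j f)) L"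

section \<open>Composition of orders\<close>

text \<open>Input edges i_k of the second graph, each with the block P_k following it.\<close>
fun blocks :: "('e \<Rightarrow> bool) \<Rightarrow> 'e list \<Rightarrow> ('e \<times> 'e list) list" where
  "blocks P [] = []"
| "blocks P (x # xs) =
     (if P x then (x, takeWhile (\<lambda>y. \<not> P y) xs) # blocks P xs else blocks P xs)"

text \<open>Composite edges are pairs (name as edge of G, name of its last piece).
  The k-th output o_k of the first order is merged with the k-th input i_k of the
  second into a new edge, followed by the block P_k.\<close>
fun comp_list :: "('e \<Rightarrow> bool) \<Rightarrow> ('e \<times> 'e) list \<Rightarrow> ('e \<times> 'e list) list \<Rightarrow> ('e \<times> 'e) list" where
  "comp_list Out [] bs = []"
| "comp_list Out (p # ps) bs =
     (if Out (snd p) then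
        (case bs of
           [] \<Rightarrow> p # comp_list Out ps []
         | (i, Pk) # bs' \<Rightarrow> (fst p, i) # map (\<lambda>e. (e, e)) Pk @ comp_list Out ps bs')
      else p # comp_list Out ps bs)"

primrec comp_upto ::
  "(nat \<Rightarrow> 'e list) \<Rightarrow> (nat \<Rightarrow> 'e \<Rightarrow> bool) \<Rightarrow> (nat \<Rightarrow> 'e \<Rightarrow> bool) \<Rightarrow> nat \<Rightarrow> ('e \<times> 'e) list" where
  "comp_upto Ls In Out 0 = []"
| "comp_upto Ls In Out (Suc j) =
     (if j = 0 then map (\<lambda>e. (e, e)) (Ls 1)
      else comp_list (Out j) (comp_upto Ls In Out j) (blocks (In (Suc j)) (Ls (Suc j))))"

definition phi_order ::
  "('v, 'e) pgraph \<Rightarrow> ('v \<Rightarrow> real \<times> real) \<Rightarrow> (nat \<Rightarrow> real) \<Rightarrow> (nat \<Rightarrow> 'e list) \<Rightarrow> nat \<Rightarrow> 'e list" where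
  "phi_order G pV ys Ls n =
     map fst (comp_upto Ls (layer_in G pV ys) (layer_out G pV ys) n)"

end

theory Submission
  imports Defs
begin


locale LD =
  fixes G :: "('v, 'e) pgraph"
    and pV :: "'v \<Rightarrow> real \<times> real"
    and pE :: "'e \<Rightarrow> real \<Rightarrow> real \<times> real"
    and a b c d :: real
    and ys :: "nat \<Rightarrow> real"
    and n :: nat
    and Ls :: "nat \<Rightarrow> 'e list"
  assumes pg: "progressive_graph G"
    and ub: "upward_BP_embedding G pV pE a b c d"
    and ld: "layer_decomposition G pV c d ys n"
    and can: "\<forall>j \<in> {1..n}. canonical_layer_order G pV pE ys j (Ls j)"
begin

abbreviation hV where "hV v \<equiv> snd (pV v)"

lemma finE: "finite (edges G)" and finV: "finite (verts G)"
  and ends: "e \<in> edges G \<Longrightarrow> src G e \<in> verts G \<and> tgt G e \<in> verts G"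
  using pg unfolding progressive_graph_def by auto

lemma bp: "BP_embedding G pV pE a b c d" using ub unfolding upward_BP_embedding_def by auto

lemma cd: "c < d" using bp unfolding BP_embedding_def by auto

lemma arcE: "e \<in> edges G \<Longrightarrow> arc (pE e) \<and> pE e 0 = pV (src G e) \<and> pE e 1 = pV (tgt G e)"
  using bp unfolding BP_embedding_def pathstart_def pathfinish_def by auto

lemma pathE: "e \<in> edges G \<Longrightarrow> path (pE e)"
  using arcE arc_imp_path by blast

lemma upE: "e \<in> edges G \<Longrightarrow> 0 \<le> t1 \<Longrightarrow> t1 < t2 \<Longrightarrow> t2 \<le> 1 \<Longrightarrow> snd (pE e t2) < snd (pE e t1)"
  using ub unfolding upward_BP_embedding_def by auto

lemma h_edge: "e \<in> edges G \<Longrightarrow> hV (tgt G e) < hV (src G e)"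
  using upE[of e 0 1] arcE[of e] by auto

lemma no_loop: "e \<in> edges G \<Longrightarrow> src G e \<noteq> tgt G e"
  using h_edge by force

lemma src_pos: "is_source G v \<Longrightarrow> hV v = d" and sink_pos: "is_sink G v \<Longrightarrow> hV v = c"
  and int_pos: "internal G v \<Longrightarrow> c < hV v \<and> hV v < d"
  using bp unfolding BP_embedding_def by auto

lemma src_deg: "is_source G v \<Longrightarrow> degree G v = 1" and sink_deg: "is_sink G v \<Longrightarrow> degree G v = 1"
  using pg unfolding progressive_graph_def by auto

lemma vclass: "v \<in> verts G \<Longrightarrow> (is_source G v \<and> hV v = d \<and> degree G v = 1) \<or> (is_sink G v \<and> hV v = c \<and> degree G v = 1) \<or> (internal G v \<and> c < hV v \<and> hV v < d)"
proof -
  assume v: "v \<in> verts G"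
  show ?thesis
  proof (cases "degree G v = 1")
    case True
    then have "indeg G v = 0 \<or> outdeg G v = 0" unfolding degree_def by auto
    then show ?thesis using v True src_pos sink_pos unfolding is_source_def is_sink_def by auto
  next
    case False
    then show ?thesis using v int_pos unfolding internal_def by auto
  qed
qed

lemma deg1_unique:
  assumes "degree G w = 1" "e \<in> edges G" "f \<in> edges G" "w = src G e \<or> w = tgt G e" "w = src G f \<or> w = tgt G f"
  shows "e = f"
proof (rule ccontr)
  assume ne: "e \<noteq> f"
  let ?I = "{e \<in> edges G. tgt G e = w}" and ?O = "{e \<in> edges G. src G e = w}"
  have fI: "finite ?I" "finite ?O" using finE by auto
  have "card ?I + card ?O \<ge> 2"
  proof -
    consider "w = src G e" "w = src G f" | "w = src G e" "w = tgt G f" | "w = tgt G e" "w = src G f" | "w = tgt G e" "w = tgt G f"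
      using assms by blast
    then show ?thesis
    proof cases
      case 1
      then have "{e,f} \<subseteq> ?O" using assms by auto
      then have "card {e,f} \<le> card ?O" using fI card_mono by blast
      then show ?thesis using ne by auto
    next
      case 2
      then have "e \<in> ?O" "f \<in> ?I" using assms by auto
      then have "card ?O \<ge> 1" "card ?I \<ge> 1" using fI by (auto simp: Suc_le_eq card_gt_0_iff)
      then show ?thesis by auto
    next
      case 3
      then have "f \<in> ?O" "e \<in> ?I" using assms by auto
      then have "card ?O \<ge> 1" "card ?I \<ge> 1" using fI by (auto simp: Suc_le_eq card_gt_0_iff)
      then show ?thesis by auto
    next
      case 4
      then have "{e,f} \<subseteq> ?I" using assms by auto
      then have "card {e,f} \<le> card ?I" using fI card_mono by blast
      then show ?thesis using ne by auto
    qed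
  qed
  then show False using assms(1) unfolding degree_def indeg_def outdeg_def by auto
qed

lemma internal_in: "internal G v \<Longrightarrow> \<exists>e\<in>edges G. tgt G e = v"
proof (rule ccontr)
  assume i: "internal G v" and "\<not> (\<exists>e\<in>edges G. tgt G e = v)"
  then have "indeg G v = 0" unfolding indeg_def by (metis (mono_tags, lifting) card.empty empty_Collect_eq)
  then have "is_source G v" using i unfolding is_source_def internal_def by auto
  then show False using src_deg i unfolding internal_def by auto
qed

lemma internal_out: "internal G v \<Longrightarrow> \<exists>e\<in>edges G. src G e = v"
proof (rule ccontr)
  assume i: "internal G v" and "\<not> (\<exists>e\<in>edges G. src G e = v)"
  then have "outdeg G v = 0" unfolding outdeg_def by (metis (mono_tags, lifting) card.empty empty_Collect_eq)
  then have "is_sink G v" using i unfolding is_sink_def internal_def by auto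
  then show False using sink_deg i unfolding internal_def by auto
qed

lemma src_not_sink: "e \<in> edges G \<Longrightarrow> \<not> is_sink G (src G e)"
proof
  assume e: "e \<in> edges G" and "is_sink G (src G e)"
  then have "card {f \<in> edges G. src G f = src G e} = 0" unfolding is_sink_def outdeg_def by auto
  moreover have "e \<in> {f \<in> edges G. src G f = src G e}" using e by auto
  ultimately show False using finE by (metis (no_types, lifting) card_0_eq empty_iff finite_subset mem_Collect_eq subsetI)
qed

lemma tgt_not_source: "e \<in> edges G \<Longrightarrow> \<not> is_source G (tgt G e)"
proof
  assume e: "e \<in> edges G" and "is_source G (tgt G e)"
  then have "card {f \<in> edges G. tgt G f = tgt G e} = 0" unfolding is_source_def indeg_def by auto
  moreover have "e \<in> {f \<in> edges G. tgt G f = tgt G e}" using e by auto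
  ultimately show False using finE by (metis (no_types, lifting) card_0_eq empty_iff finite_subset mem_Collect_eq subsetI)
qed

lemma src_h: "e \<in> edges G \<Longrightarrow> c < hV (src G e) \<and> hV (src G e) \<le> d"
  using vclass[of "src G e"] ends[of e] src_not_sink[of e] cd by auto

lemma tgt_h: "e \<in> edges G \<Longrightarrow> c \<le> hV (tgt G e) \<and> hV (tgt G e) < d"
  using vclass[of "tgt G e"] ends[of e] tgt_not_source[of e] cd by auto

lemma ys0: "ys 0 = d" and ysn: "ys n = c" and ysdec: "j < n \<Longrightarrow> ys (Suc j) < ys j"
  and ysline: "0 < j \<Longrightarrow> j < n \<Longrightarrow> v \<in> verts G \<Longrightarrow> hV v \<noteq> ys j"
  and ycard: "j \<in> {1..n} \<Longrightarrow> card (strip_internal G pV ys j) \<le> 1"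
  using ld unfolding layer_decomposition_def by auto

lemma npos: "0 < n" using ys0 ysn cd by (cases n) auto

lemma ys_mono: "i < k \<Longrightarrow> k \<le> n \<Longrightarrow> ys k < ys i"
proof (induction k)
  case 0 then show ?case by simp
next
  case (Suc k)
  then show ?case using ysdec[of k] by (cases "i = k") auto
qed

lemma ys_le: "i \<le> k \<Longrightarrow> k \<le> n \<Longrightarrow> ys k \<le> ys i"
  using ys_mono by (cases "i = k") (auto simp: less_imp_le)

lemma ys_range: "k \<le> n \<Longrightarrow> c \<le> ys k \<and> ys k \<le> d"
  using ys_le[of 0 k] ys_le[of k n] ys0 ysn by auto

lemma S_unique: "1 \<le> k \<Longrightarrow> k \<le> n \<Longrightarrow> v \<in> strip_internal G pV ys k \<Longrightarrow> w \<in> strip_internal G pV ys k \<Longrightarrow> v = w"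
proof -
  assume "1 \<le> k" "k \<le> n" "v \<in> strip_internal G pV ys k" "w \<in> strip_internal G pV ys k"
  moreover have "finite (strip_internal G pV ys k)" using finV unfolding strip_internal_def by auto
  ultimately show ?thesis using ycard[of k] card_le_Suc0_iff_eq[of "strip_internal G pV ys k"] by auto
qed

lemma line_deg1: "w \<in> verts G \<Longrightarrow> i \<le> n \<Longrightarrow> hV w = ys i \<Longrightarrow> degree G w = 1"
  using vclass[of w] ysline[of i w] ys0 ysn cd by (cases "i = 0"; cases "i = n") auto

lemma open_strip: "w \<in> verts G \<Longrightarrow> 1 \<le> k \<Longrightarrow> k \<le> n \<Longrightarrow> ys k < hV w \<Longrightarrow> hV w < ys (k-1) \<Longrightarrow> w \<in> strip_internal G pV ys k"
proof -
  assume a: "w \<in> verts G" "1 \<le> k" "k \<le> n" "ys k < hV w" "hV w < ys (k-1)"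
  have "c \<le> ys k" "ys (k-1) \<le> d" using ys_range[of k] ys_range[of "k-1"] a by auto
  then show ?thesis using vclass[of w] a unfolding strip_internal_def by auto
qed

lemma S_props: "v \<in> strip_internal G pV ys k \<Longrightarrow> 1 \<le> k \<Longrightarrow> k \<le> n \<Longrightarrow> v \<in> verts G \<and> internal G v \<and> ys k < hV v \<and> hV v < ys (k-1)"
proof -
  assume v: "v \<in> strip_internal G pV ys k" and k: "1 \<le> k" "k \<le> n"
  then have vv: "v \<in> verts G" "internal G v" "ys k \<le> hV v" "hV v \<le> ys (k-1)" unfolding strip_internal_def by auto
  have "hV v \<noteq> ys k" using ysline[of k v] vv int_pos[of v] ysn k by (cases "k = n") auto
  moreover have "hV v \<noteq> ys (k-1)" using ysline[of "k-1" v] vv int_pos[of v] ys0 k by (cases "k = 1") auto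
  ultimately show ?thesis using vv by auto
qed

end

context LD begin

definition srel where "srel = {(x,y). x \<in> edges G \<and> y \<in> edges G \<and> tgt G x = src G y}"

lemma path_rtrancl: "is_epath G es \<Longrightarrow> (hd es, last es) \<in> srel\<^sup>*"
proof (induction es)
  case Nil then show ?case by (simp add: is_epath_def)
next
  case (Cons x es)
  show ?case
  proof (cases es)
    case Nil then show ?thesis by simp
  next
    case (Cons y es')
    have p: "is_epath G es" using Cons.prems Cons unfolding is_epath_def
      by (auto simp: nth_Cons_Suc)
    have "(x, y) \<in> srel" using Cons.prems Cons unfolding is_epath_def srel_def
      by (auto dest: spec[of _ 0])
    then show ?thesis using Cons.IH[OF p] Cons by simp
  qed
qed

lemma trancl_h: "(x, z) \<in> srel\<^sup>+ \<Longrightarrow> hV (src G z) \<le> hV (tgt G x) \<and> x \<in> edges G \<and> z \<in> edges G"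
proof (induction rule: trancl_induct)
  case (base y) then show ?case unfolding srel_def by auto
next
  case (step y z)
  then show ?case unfolding srel_def using h_edge[of y] by auto
qed

lemma trancl_ne: "(x, z) \<in> srel\<^sup>+ \<Longrightarrow> x \<noteq> z"
  using trancl_h h_edge by fastforce

lemma trancl_path: "(x, z) \<in> srel\<^sup>+ \<Longrightarrow> \<exists>es. is_epath G es \<and> hd es = x \<and> last es = z"
proof (induction rule: trancl_induct)
  case (base y)
  then have "is_epath G [x, y]" unfolding srel_def is_epath_def by (auto simp: less_Suc_eq)
  then show ?case by force
next
  case (step y z)
  then obtain es where es: "is_epath G es" "hd es = x" "last es = y" by blast
  have "is_epath G (es @ [z])" using es step(2) unfolding is_epath_def srel_def
    apply (auto simp: nth_append less_Suc_eq last_conv_nth)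
    by (subgoal_tac "i = length es - 1") auto
  then show ?case using es by (metis append_is_Nil_conv hd_append2 is_epath_def last_snoc)
qed

lemma reach_iff: "edge_reach G x z \<longleftrightarrow> (x, z) \<in> srel\<^sup>+"
proof
  assume "edge_reach G x z"
  then obtain es where "x \<noteq> z" "is_epath G es" "hd es = x" "last es = z" unfolding edge_reach_def by auto
  then show "(x, z) \<in> srel\<^sup>+" using path_rtrancl by (metis rtranclD)
next
  assume "(x, z) \<in> srel\<^sup>+"
  then show "edge_reach G x z" unfolding edge_reach_def using trancl_ne trancl_path by blast
qed

lemma reach_h: "edge_reach G x z \<Longrightarrow> hV (src G z) \<le> hV (tgt G x) \<and> x \<in> edges G \<and> z \<in> edges G"
  using reach_iff trancl_h by blast

lemma reach_trans: "edge_reach G x y \<Longrightarrow> edge_reach G y z \<Longrightarrow> edge_reach G x z"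
  using reach_iff by auto

lemma reach_step: "x \<in> edges G \<Longrightarrow> y \<in> edges G \<Longrightarrow> tgt G x = src G y \<Longrightarrow> edge_reach G x y"
  using reach_iff srel_def by auto

lemma reach_into: "edge_reach G x z \<Longrightarrow> tgt G x = src G z \<or> (\<exists>w. edge_reach G x w \<and> tgt G w = src G z)"
  unfolding reach_iff by (erule tranclE) (auto simp: srel_def)

end

context LD begin

abbreviation xt where "xt e h \<equiv> xat pE e h"

lemma cont_y: "e \<in> edges G \<Longrightarrow> continuous_on {0..1} (\<lambda>t. snd (pE e t))"
  using pathE[of e] unfolding path_def by (intro continuous_intros)

lemma tau_ex: assumes e: "e \<in> edges G" and h: "hV (tgt G e) \<le> h" "h \<le> hV (src G e)"
  shows "\<exists>!\<tau>. \<tau> \<in> {0..1} \<and> snd (pE e \<tau>) = h"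
proof -
  have "\<exists>x. 0 \<le> x \<and> x \<le> 1 \<and> snd (pE e x) = h"
    using IVT2'[of "\<lambda>t. snd (pE e t)" 1 h 0] cont_y[OF e] arcE[OF e] h by auto
  moreover have "\<tau>1 = \<tau>2" if "\<tau>1 \<in> {0..1}" "\<tau>2 \<in> {0..1}" "snd (pE e \<tau>1) = h" "snd (pE e \<tau>2) = h" for \<tau>1 \<tau>2
    using upE[OF e, of \<tau>1 \<tau>2] upE[OF e, of \<tau>2 \<tau>1] that by (cases "\<tau>1 < \<tau>2"; cases "\<tau>2 < \<tau>1") auto
  ultimately show ?thesis by auto
qed

lemma xat_pt: assumes e: "e \<in> edges G" and h: "hV (tgt G e) \<le> h" "h \<le> hV (src G e)"
  shows "(xt e h, h) \<in> path_image (pE e)"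
proof -
  define \<tau> where "\<tau> = (THE \<tau>. \<tau> \<in> {0..1} \<and> snd (pE e \<tau>) = h)"
  have t: "\<tau> \<in> {0..1} \<and> snd (pE e \<tau>) = h" unfolding \<tau>_def using theI'[OF tau_ex[OF e h]] .
  have "pE e \<tau> = (xt e h, h)" unfolding xat_def \<tau>_def[symmetric] using t by (metis prod.collapse)
  then show ?thesis using t unfolding path_image_def by (metis image_eqI)
qed

lemma ht_bounds: assumes e: "e \<in> edges G" and t: "\<tau> \<in> {0..1}"
  shows "hV (tgt G e) \<le> snd (pE e \<tau>) \<and> snd (pE e \<tau>) \<le> hV (src G e)"
proof -
  have a: "hV (tgt G e) \<le> snd (pE e \<tau>)"
  proof (cases "\<tau> = 1")
    case True then show ?thesis using arcE[OF e] by simp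
  next
    case False then show ?thesis using upE[OF e, of \<tau> 1] arcE[OF e] t by auto
  qed
  have b: "snd (pE e \<tau>) \<le> hV (src G e)"
  proof (cases "\<tau> = 0")
    case True then show ?thesis using arcE[OF e] by simp
  next
    case False then show ?thesis using upE[OF e, of 0 \<tau>] arcE[OF e] t by auto
  qed
  show ?thesis using a b by auto
qed

lemma xat_at: assumes e: "e \<in> edges G" and t: "\<tau> \<in> {0..1}"
  shows "xt e (snd (pE e \<tau>)) = fst (pE e \<tau>)"
proof -
  have h: "hV (tgt G e) \<le> snd (pE e \<tau>)" "snd (pE e \<tau>) \<le> hV (src G e)"
    using ht_bounds[OF e t] by auto
  have "(THE \<tau>'. \<tau>' \<in> {0..1} \<and> snd (pE e \<tau>') = snd (pE e \<tau>)) = \<tau>"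
    using tau_ex[OF e h] t by (metis (mono_tags, lifting) the_equality)
  then show ?thesis unfolding xat_def by simp
qed

lemma xat_tgt: "e \<in> edges G \<Longrightarrow> xt e (hV (tgt G e)) = fst (pV (tgt G e))"
  using xat_at[of e 1] arcE[of e] by auto

lemma xat_src: "e \<in> edges G \<Longrightarrow> xt e (hV (src G e)) = fst (pV (src G e))"
  using xat_at[of e 0] arcE[of e] by auto

lemma xat_cont: assumes e: "e \<in> edges G"
  shows "continuous_on {hV (tgt G e)..hV (src G e)} (xt e)"
proof -
  define g where "g = (\<lambda>h. THE \<tau>. \<tau> \<in> {0..1} \<and> snd (pE e \<tau>) = h)"
  have img: "(\<lambda>t. snd (pE e t)) ` {0..1} = {hV (tgt G e)..hV (src G e)}"
  proof
    show "(\<lambda>t. snd (pE e t)) ` {0..1} \<subseteq> {hV (tgt G e)..hV (src G e)}"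
      using ht_bounds[OF e] by auto
  next
    show "{hV (tgt G e)..hV (src G e)} \<subseteq> (\<lambda>t. snd (pE e t)) ` {0..1}"
    proof
      fix h assume "h \<in> {hV (tgt G e)..hV (src G e)}"
      then obtain \<tau> where "\<tau> \<in> {0..1}" "snd (pE e \<tau>) = h" using tau_ex[OF e, of h] by auto
      then show "h \<in> (\<lambda>t. snd (pE e t)) ` {0..1}" by (metis image_eqI)
    qed
  qed
  have inv: "\<forall>t\<in>{0..1}. g (snd (pE e t)) = t"
  proof
    fix t :: real assume t: "t \<in> {0..1}"
    have h: "hV (tgt G e) \<le> snd (pE e t)" "snd (pE e t) \<le> hV (src G e)" using img t by auto
    show "g (snd (pE e t)) = t" unfolding g_def using tau_ex[OF e h] t by (metis (mono_tags, lifting) the_equality)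
  qed
  have cg: "continuous_on {hV (tgt G e)..hV (src G e)} g"
    using continuous_on_inv[OF cont_y[OF e] _ inv] img by auto
  have gi: "g ` {hV (tgt G e)..hV (src G e)} \<subseteq> {0..1}"
  proof
    fix h assume "h \<in> g ` {hV (tgt G e)..hV (src G e)}"
    then obtain h0 where "h0 \<in> {hV (tgt G e)..hV (src G e)}" "h = g h0" by auto
    then have "h0 \<in> (\<lambda>t. snd (pE e t)) ` {0..1}" using img by simp
    then obtain t where "t \<in> {0..1}" "h0 = snd (pE e t)" by blast
    then show "h \<in> {0..1}" using inv \<open>h = g h0\<close> by auto
  qed
  have cf: "continuous_on {0..1} (\<lambda>t. fst (pE e t))"
    using pathE[OF e] unfolding path_def by (intro continuous_intros)
  have "continuous_on {hV (tgt G e)..hV (src G e)} (\<lambda>h. fst (pE e (g h)))"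
    using continuous_on_compose2[OF cf cg gi] .
  moreover have "xt e = (\<lambda>h. fst (pE e (g h)))" unfolding xat_def g_def by auto
  ultimately show ?thesis by simp
qed

lemma sp: assumes e: "e \<in> edges G" and f: "f \<in> edges G" and h: "h1 \<le> h2"
  and se: "hV (tgt G e) \<le> h1" "h2 \<le> hV (src G e)" and sf: "hV (tgt G f) \<le> h1" "h2 \<le> hV (src G f)"
  and nc: "\<forall>h\<in>{h1..h2}. xt e h \<noteq> xt f h"
  shows "xt e h1 < xt f h1 \<longleftrightarrow> xt e h2 < xt f h2"
proof -
  define g where "g = (\<lambda>h. xt e h - xt f h)"
  have "continuous_on {h1..h2} (xt e)" using xat_cont[OF e] continuous_on_subset se by fastforce
  moreover have "continuous_on {h1..h2} (xt f)" using xat_cont[OF f] continuous_on_subset sf by fastforce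
  ultimately have cg: "continuous_on {h1..h2} g" unfolding g_def by (intro continuous_intros)
  have nz: "\<forall>h\<in>{h1..h2}. g h \<noteq> 0" using nc unfolding g_def by auto
  have a: "g h1 < 0 \<Longrightarrow> g h2 < 0"
  proof (rule ccontr)
    assume "g h1 < 0" "\<not> g h2 < 0"
    then have "g h1 \<le> 0" "0 \<le> g h2" by auto
    then obtain x where "h1 \<le> x" "x \<le> h2" "g x = 0" using IVT'[of g h1 0 h2, OF _ _ h cg] by blast
    then show False using nz by auto
  qed
  have b: "g h2 < 0 \<Longrightarrow> g h1 < 0"
  proof (rule ccontr)
    assume "g h2 < 0" "\<not> g h1 < 0"
    then have "g h2 \<le> 0" "0 \<le> g h1" by auto
    then obtain x where "h1 \<le> x" "x \<le> h2" "g x = 0" using IVT2'[of g h2 0 h1, OF _ _ h cg] by blast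
    then show False using nz by auto
  qed
  show ?thesis using a b unfolding g_def by auto
qed

lemma cross: assumes e: "e \<in> edges G" and f: "f \<in> edges G" and ne: "e \<noteq> f"
  and se: "hV (tgt G e) \<le> h" "h \<le> hV (src G e)" and sf: "hV (tgt G f) \<le> h" "h \<le> hV (src G f)"
  and eq: "xt e h = xt f h"
  shows "\<exists>w. pV w = (xt e h, h) \<and> (w = src G e \<or> w = tgt G e) \<and> (w = src G f \<or> w = tgt G f)"
proof -
  have "(xt e h, h) \<in> path_image (pE e) \<inter> path_image (pE f)"
    using xat_pt[OF e se] xat_pt[OF f sf] eq by auto
  then have "(xt e h, h) \<in> pV ` ({src G e, tgt G e} \<inter> {src G f, tgt G f})"
    using bp e f ne unfolding BP_embedding_def by blast
  then show ?thesis by auto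
qed

lemma vert_on: assumes f: "f \<in> edges G" and v: "v \<in> verts G"
  and sf: "hV (tgt G f) \<le> h" "h \<le> hV (src G f)" and eq: "pV v = (xt f h, h)"
  shows "v = src G f \<or> v = tgt G f"
  using xat_pt[OF f sf] eq bp f v unfolding BP_embedding_def by auto

end

context LD begin

definition E where "E j = {e \<in> edges G. ys j \<le> hV (src G e)}"
definition Cc where "Cc j = {e \<in> E j. hV (tgt G e) < ys j}"
abbreviation S where "S k \<equiv> strip_internal G pV ys k"

lemma below_strip: "w \<in> verts G \<Longrightarrow> hV w < ys (k-1) \<Longrightarrow> w \<notin> S k \<Longrightarrow> 1 \<le> k \<Longrightarrow> k < n \<Longrightarrow> hV w < ys k"
  using ysline[of k w] open_strip[of w k] by force

lemma above_strip: "w \<in> verts G \<Longrightarrow> ys k < hV w \<Longrightarrow> w \<notin> S k \<Longrightarrow> 1 \<le> k \<Longrightarrow> k \<le> n \<Longrightarrow> ys (k-1) \<le> hV w"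
  using open_strip[of w k] by force

lemma LI: assumes k: "1 \<le> k" "k \<le> n" shows "layer_in G pV ys k e \<longleftrightarrow> e \<in> Cc (k-1)"
proof
  assume a: "layer_in G pV ys k e"
  then have e: "e \<in> edges G" "hV (tgt G e) < ys (k-1)" "ys k < hV (src G e)" "src G e \<notin> S k"
    unfolding layer_in_def layer_edges_def by auto
  then have "ys (k-1) \<le> hV (src G e)" using above_strip[of "src G e" k] ends[of e] k by auto
  then show "e \<in> Cc (k-1)" using e unfolding Cc_def E_def by auto
next
  assume a: "e \<in> Cc (k-1)"
  then have e: "e \<in> edges G" "hV (tgt G e) < ys (k-1)" "ys (k-1) \<le> hV (src G e)" unfolding Cc_def E_def by auto
  have "ys k < ys (k-1)" using ys_mono[of "k-1" k] k by auto
  moreover have "src G e \<notin> S k" using S_props[of "src G e" k] k e by auto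
  ultimately show "layer_in G pV ys k e" using e unfolding layer_in_def layer_edges_def by auto
qed

lemma LO: assumes k: "1 \<le> k" "k < n" shows "layer_out G pV ys k e \<longleftrightarrow> e \<in> Cc k"
proof
  assume a: "layer_out G pV ys k e"
  then have e: "e \<in> edges G" "hV (tgt G e) < ys (k-1)" "ys k < hV (src G e)" "tgt G e \<notin> S k"
    unfolding layer_out_def layer_edges_def by auto
  then have "hV (tgt G e) < ys k" using below_strip[of "tgt G e" k] ends[of e] k by auto
  then show "e \<in> Cc k" using e unfolding Cc_def E_def by auto
next
  assume a: "e \<in> Cc k"
  then have e: "e \<in> edges G" "hV (tgt G e) < ys k" "ys k \<le> hV (src G e)" unfolding Cc_def E_def by auto
  have "hV (src G e) \<noteq> ys k" using ysline[of k "src G e"] k ends[of e] e by auto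
  moreover have "ys k \<le> ys (k-1)" using ys_le[of "k-1" k] k by auto
  moreover have "tgt G e \<notin> S k" using S_props[of "tgt G e" k] k e by auto
  ultimately show "layer_out G pV ys k e" using e unfolding layer_out_def layer_edges_def by auto
qed

lemma LE: assumes k: "1 \<le> k" "k \<le> n"
  shows "e \<in> layer_edges G pV ys k \<longleftrightarrow> e \<in> Cc (k-1) \<or> (e \<in> edges G \<and> src G e \<in> S k)"
proof
  assume a: "e \<in> layer_edges G pV ys k"
  show "e \<in> Cc (k-1) \<or> (e \<in> edges G \<and> src G e \<in> S k)"
  proof (cases "src G e \<in> S k")
    case True then show ?thesis using a unfolding layer_edges_def by auto
  next
    case False then have "layer_in G pV ys k e" using a unfolding layer_in_def by auto
    then show ?thesis using LI k by auto
  qed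
next
  assume "e \<in> Cc (k-1) \<or> (e \<in> edges G \<and> src G e \<in> S k)"
  then show "e \<in> layer_edges G pV ys k"
  proof
    assume "e \<in> Cc (k-1)" then show ?thesis using LI k unfolding layer_in_def by auto
  next
    assume e: "e \<in> edges G \<and> src G e \<in> S k"
    then show ?thesis using S_props[of "src G e" k] k h_edge[of e] unfolding layer_edges_def by auto
  qed
qed

lemma E_step: assumes k: "1 \<le> k" "k \<le> n"
  shows "e \<in> E k \<longleftrightarrow> e \<in> E (k-1) \<or> (e \<in> edges G \<and> src G e \<in> S k)"
proof
  assume e: "e \<in> E k"
  show "e \<in> E (k-1) \<or> (e \<in> edges G \<and> src G e \<in> S k)"
  proof (cases "ys (k-1) \<le> hV (src G e)")
    case True then show ?thesis using e unfolding E_def by auto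
  next
    case False
    have "hV (src G e) \<noteq> ys k"
    proof (cases "k = n")
      case True then show ?thesis using src_h[of e] e ysn unfolding E_def by auto
    next
      case False then show ?thesis using ysline[of k "src G e"] k e ends[of e] unfolding E_def by auto
    qed
    then have "src G e \<in> S k" using open_strip[of "src G e" k] e False k ends[of e] unfolding E_def by auto
    then show ?thesis using e unfolding E_def by auto
  qed
next
  assume "e \<in> E (k-1) \<or> (e \<in> edges G \<and> src G e \<in> S k)"
  then show "e \<in> E k"
  proof
    assume "e \<in> E (k-1)" then show ?thesis using ys_le[of "k-1" k] k unfolding E_def by auto
  next
    assume "e \<in> edges G \<and> src G e \<in> S k" then show ?thesis using S_props[of "src G e" k] k unfolding E_def by auto
  qed
qed

lemma C_step: assumes k: "1 \<le> k" "k < n"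
  shows "e \<in> Cc k \<longleftrightarrow> (e \<in> Cc (k-1) \<and> tgt G e \<notin> S k) \<or> (e \<in> edges G \<and> src G e \<in> S k)"
proof
  assume e: "e \<in> Cc k"
  then have "e \<in> E (k-1) \<or> (e \<in> edges G \<and> src G e \<in> S k)" using E_step[of k e] k unfolding Cc_def by auto
  then show "(e \<in> Cc (k-1) \<and> tgt G e \<notin> S k) \<or> (e \<in> edges G \<and> src G e \<in> S k)"
  proof
    assume e1: "e \<in> E (k-1)"
    have "hV (tgt G e) < ys (k-1)" using e ys_le[of "k-1" k] k unfolding Cc_def by auto
    moreover have "tgt G e \<notin> S k" using S_props[of "tgt G e" k] k e unfolding Cc_def by auto
    ultimately show ?thesis using e1 unfolding Cc_def by auto
  qed auto
next
  assume "(e \<in> Cc (k-1) \<and> tgt G e \<notin> S k) \<or> (e \<in> edges G \<and> src G e \<in> S k)"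
  then show "e \<in> Cc k"
  proof
    assume e: "e \<in> Cc (k-1) \<and> tgt G e \<notin> S k"
    then have "hV (tgt G e) < ys k" using below_strip[of "tgt G e" k] ends[of e] k unfolding Cc_def E_def by auto
    moreover have "e \<in> E k" using E_step[of k e] e k unfolding Cc_def by auto
    ultimately show ?thesis unfolding Cc_def by auto
  next
    assume e: "e \<in> edges G \<and> src G e \<in> S k"
    have "tgt G e \<notin> S k" using S_unique[of k "src G e" "tgt G e"] no_loop[of e] e k by auto
    moreover have "hV (tgt G e) < ys (k-1)" using S_props[of "src G e" k] h_edge[of e] e k by auto
    ultimately have "hV (tgt G e) < ys k" using below_strip[of "tgt G e" k] ends[of e] k e by auto
    moreover have "e \<in> E k" using E_step[of k e] e k by auto
    ultimately show ?thesis unfolding Cc_def by auto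
  qed
qed

lemma En: "E n = edges G" using src_h ysn unfolding E_def by fastforce

lemma C0: "Cc 0 = E 0" using tgt_h ys0 unfolding Cc_def E_def by fastforce

lemma reach_out: "i < n \<Longrightarrow> y \<in> E i \<Longrightarrow> y \<in> Cc i \<or> (\<exists>u\<in>Cc i. edge_reach G y u)"
proof (induction "card {e \<in> edges G. hV (src G e) < hV (src G y)}" arbitrary: y rule: less_induct)
  case less
  show ?case
  proof (cases "hV (tgt G y) < ys i")
    case True then show ?thesis using less.prems unfolding Cc_def by auto
  next
    case False
    have y: "y \<in> edges G" using less.prems unfolding E_def by auto
    have "c < ys i" using ys_mono[of i n] less.prems ysn by auto
    then have "\<not> is_sink G (tgt G y)" using False sink_pos by force
    then have "internal G (tgt G y)" using vclass[of "tgt G y"] ends[OF y] tgt_not_source[OF y] by auto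
    then obtain y' where y': "y' \<in> edges G" "src G y' = tgt G y" using internal_out by blast
    have r: "edge_reach G y y'" using reach_step[OF y y'(1)] y'(2) by auto
    have y'E: "y' \<in> E i" using y' False unfolding E_def by auto
    have sub: "{e \<in> edges G. hV (src G e) < hV (src G y')} \<subset> {e \<in> edges G. hV (src G e) < hV (src G y)}"
    proof
      show "{e \<in> edges G. hV (src G e) < hV (src G y')} \<subseteq> {e \<in> edges G. hV (src G e) < hV (src G y)}"
        using y' h_edge[OF y] by auto
      have "y' \<in> {e \<in> edges G. hV (src G e) < hV (src G y)}" using y' h_edge[OF y] by auto
      moreover have "y' \<notin> {e \<in> edges G. hV (src G e) < hV (src G y')}" by auto
      ultimately show "{e \<in> edges G. hV (src G e) < hV (src G y')} \<noteq> {e \<in> edges G. hV (src G e) < hV (src G y)}" by blast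
    qed
    have "card {e \<in> edges G. hV (src G e) < hV (src G y')} < card {e \<in> edges G. hV (src G e) < hV (src G y)}"
      using psubset_card_mono[OF _ sub] finE by auto
    then have "y' \<in> Cc i \<or> (\<exists>u\<in>Cc i. edge_reach G y' u)" using less.hyps[OF _ less.prems(1) y'E] by blast
    then show ?thesis using r reach_trans by blast
  qed
qed

lemma cut_noreach: "u \<in> Cc i \<Longrightarrow> z \<in> E i \<Longrightarrow> \<not> edge_reach G u z"
  using reach_h[of u z] unfolding Cc_def E_def by auto

lemma new_noreach: assumes k: "1 \<le> k" "k \<le> n" and x: "x \<in> edges G" "src G x \<in> S k" and z: "z \<in> E k"
  shows "\<not> edge_reach G x z"
proof
  assume r: "edge_reach G x z"
  then have h: "hV (src G z) \<le> hV (tgt G x)" "z \<in> edges G" using reach_h by auto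
  have zk: "ys k \<le> hV (src G z)" using z unfolding E_def by auto
  have tS: "tgt G x \<notin> S k" using S_unique[of k "src G x" "tgt G x"] no_loop[OF x(1)] x k by auto
  have tl: "hV (tgt G x) < ys (k-1)" using S_props[of "src G x" k] h_edge[OF x(1)] x k by auto
  show False
  proof (cases "hV (tgt G x) = ys k")
    case True
    show False
    proof (cases "k = n")
      case True then show False using h zk src_h[of z] ysn \<open>hV (tgt G x) = ys k\<close> by auto
    next
      case False then show False using ysline[of k "tgt G x"] ends[OF x(1)] k True by auto
    qed
  next
    case False
    then have "ys k < hV (tgt G x)" using h zk by auto
    then show False using open_strip[of "tgt G x" k] ends[OF x(1)] k tl tS by auto
  qed
qed

lemma reach_v: assumes x: "x \<in> edges G" and z: "z \<in> edges G"
  shows "edge_reach G x z \<longleftrightarrow> tgt G x = src G z \<or> (\<exists>w. edge_reach G x w \<and> tgt G w = src G z)"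
proof
  assume "edge_reach G x z" then show "tgt G x = src G z \<or> (\<exists>w. edge_reach G x w \<and> tgt G w = src G z)"
    using reach_into by blast
next
  assume "tgt G x = src G z \<or> (\<exists>w. edge_reach G x w \<and> tgt G w = src G z)"
  then show "edge_reach G x z"
  proof
    assume "tgt G x = src G z" then show ?thesis using reach_step x z by auto
  next
    assume "\<exists>w. edge_reach G x w \<and> tgt G w = src G z"
    then obtain w where "edge_reach G x w" "tgt G w = src G z" by blast
    then show ?thesis using reach_step[of w z] reach_h[of x w] z reach_trans by blast
  qed
qed

end

context LD begin

abbreviation key where "key k e \<equiv> canon_key G pV pE ys k e"

lemma lh_empty: "S k = {} \<Longrightarrow> layer_height G pV ys k = ys (k-1)"
  unfolding layer_height_def by auto

lemma lh_v: "1 \<le> k \<Longrightarrow> k \<le> n \<Longrightarrow> v \<in> S k \<Longrightarrow> layer_height G pV ys k = hV v"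
proof -
  assume k: "1 \<le> k" "k \<le> n" and v: "v \<in> S k"
  have "(THE w. w \<in> S k) = v" using S_unique[OF k v] v by (metis the_equality)
  then show ?thesis unfolding layer_height_def using v by auto
qed

lemma NC: assumes k: "1 \<le> k" "k \<le> n" and e: "e \<in> edges G" and f: "f \<in> edges G" and ne: "e \<noteq> f"
  and h: "ys k \<le> h" "h \<le> ys (k-1)"
  and se: "hV (tgt G e) \<le> h" "h \<le> hV (src G e)" and sf: "hV (tgt G f) \<le> h" "h \<le> hV (src G f)"
  and eq: "xt e h = xt f h"
  shows "\<exists>v\<in>S k. (v = src G e \<or> v = tgt G e) \<and> (v = src G f \<or> v = tgt G f)"
proof -
  obtain w where w: "pV w = (xt e h, h)" "w = src G e \<or> w = tgt G e" "w = src G f \<or> w = tgt G f"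
    using cross[OF e f ne se sf eq] by blast
  have wv: "w \<in> verts G" using w ends[OF e] by auto
  have hw: "hV w = h" using w by simp
  have "hV w \<noteq> ys k"
  proof
    assume "hV w = ys k" then have "degree G w = 1" using line_deg1[OF wv] k by auto
    then show False using deg1_unique[OF _ e f w(2) w(3)] ne by auto
  qed
  moreover have "hV w \<noteq> ys (k-1)"
  proof
    assume "hV w = ys (k-1)" then have "degree G w = 1" using line_deg1[OF wv, of "k-1"] k by auto
    then show False using deg1_unique[OF _ e f w(2) w(3)] ne by auto
  qed
  ultimately have "w \<in> S k" using open_strip[OF wv k] hw h by auto
  then show ?thesis using w by auto
qed

lemma sp_strip: assumes k: "1 \<le> k" "k \<le> n" and e: "e \<in> edges G" and f: "f \<in> edges G" and ne: "e \<noteq> f"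
  and h: "ys k \<le> h1" "h1 \<le> h2" "h2 \<le> ys (k-1)"
  and se: "hV (tgt G e) \<le> h1" "h2 \<le> hV (src G e)" and sf: "hV (tgt G f) \<le> h1" "h2 \<le> hV (src G f)"
  and ni: "\<not> (\<exists>v\<in>S k. (v = src G e \<or> v = tgt G e) \<and> (v = src G f \<or> v = tgt G f))"
  shows "xt e h1 < xt f h1 \<longleftrightarrow> xt e h2 < xt f h2"
proof (rule sp[OF e f h(2) se sf])
  show "\<forall>h\<in>{h1..h2}. xt e h \<noteq> xt f h"
  proof
    fix h assume hh: "h \<in> {h1..h2}"
    show "xt e h \<noteq> xt f h"
    proof
      assume "xt e h = xt f h"
      then show False using NC[OF k e f ne, of h] hh h se sf ni by auto
    qed
  qed
qed

lemma in_span: assumes k: "1 \<le> k" "k \<le> n" and e: "e \<in> Cc (k-1)"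
  shows "e \<in> edges G" "ys (k-1) \<le> hV (src G e)" "src G e \<notin> S k"
    "tgt G e \<notin> S k \<Longrightarrow> hV (tgt G e) \<le> ys k"
proof -
  show e1: "e \<in> edges G" "ys (k-1) \<le> hV (src G e)" using e unfolding Cc_def E_def by auto
  show "src G e \<notin> S k" using S_props[of "src G e" k] k e1 by auto
  assume t: "tgt G e \<notin> S k"
  show "hV (tgt G e) \<le> ys k"
  proof (rule ccontr)
    assume "\<not> hV (tgt G e) \<le> ys k"
    moreover have "hV (tgt G e) < ys (k-1)" using e unfolding Cc_def by auto
    ultimately show False using open_strip[of "tgt G e" k] ends[OF e1(1)] k t by auto
  qed
qed

lemma out_span: assumes k: "1 \<le> k" "k < n" and e: "e \<in> Cc k"
  shows "e \<in> edges G" "hV (tgt G e) < ys k" "tgt G e \<notin> S k"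
    "src G e \<notin> S k \<Longrightarrow> ys (k-1) \<le> hV (src G e)"
proof -
  show e1: "e \<in> edges G" "hV (tgt G e) < ys k" using e unfolding Cc_def E_def by auto
  show "tgt G e \<notin> S k" using S_props[of "tgt G e" k] k e1 by auto
  assume s: "src G e \<notin> S k"
  have "ys k \<le> hV (src G e)" using e unfolding Cc_def E_def by auto
  moreover have "hV (src G e) \<noteq> ys k" using ysline[of k "src G e"] k ends[OF e1(1)] by auto
  ultimately show "ys (k-1) \<le> hV (src G e)" using above_strip[of "src G e" k] ends[OF e1(1)] k s by auto
qed

lemma lex_irrefl: "\<not> lex_less x x" unfolding lex_less_def by (auto split: prod.splits)

lemma GA: assumes k: "1 \<le> k" "k \<le> n" and e: "e \<in> Cc (k-1)" and f: "f \<in> Cc (k-1)"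
  and lx: "lex_less (key k e) (key k f)"
  shows "xt e (ys (k-1)) < xt f (ys (k-1))"
proof -
  have ne: "e \<noteq> f" using lx lex_irrefl by metis
  note ei = in_span[OF k e] and fi = in_span[OF k f]
  have ykk: "ys k < ys (k-1)" using ys_mono[of "k-1" k] k by auto
  show ?thesis
  proof (cases "S k = {}")
    case True
    then show ?thesis using lx lh_empty[OF True] unfolding canon_key_def lex_less_def by auto
  next
    case False
    then obtain v where v: "v \<in> S k" by auto
    note vp = S_props[OF v k]
    have Sv: "\<And>w. w \<in> S k \<longleftrightarrow> w = v" using S_unique[OF k v] v by blast
    have lhv: "layer_height G pV ys k = hV v" using lh_v[OF k v] .
    have pv: "pV v = (fst (pV v), hV v)" by simp
    consider "tgt G e = v" "tgt G f = v" | "tgt G e \<noteq> v" "tgt G f \<noteq> v" | "tgt G e = v" "tgt G f \<noteq> v"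
      | "tgt G e \<noteq> v" "tgt G f = v" by blast
    then show ?thesis
    proof cases
      case 1
      then show ?thesis using lx Sv unfolding canon_key_def lex_less_def by auto
    next
      case 2
      then have "xt e (hV v) < xt f (hV v)" using lx Sv ei(3) fi(3) lhv unfolding canon_key_def lex_less_def by auto
      moreover have "xt e (hV v) < xt f (hV v) \<longleftrightarrow> xt e (ys (k-1)) < xt f (ys (k-1))"
        by (rule sp_strip[OF k ei(1) fi(1) ne]) (use 2 vp ei fi Sv in auto)
      ultimately show ?thesis by simp
    next
      case 3
      have "xt f (hV v) \<noteq> fst (pV v)"
      proof
        assume "xt f (hV v) = fst (pV v)"
        then have "pV v = (xt f (hV v), hV v)" by (metis prod.collapse)
        then show False using vert_on[OF fi(1) vp[THEN conjunct1], of "hV v"] 3 fi Sv vp by auto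
      qed
      then have "fst (pV v) < xt f (hV v)" using lx Sv fi(3) 3 lhv unfolding canon_key_def lex_less_def by auto
      moreover have "xt e (hV v) = fst (pV v)" using xat_tgt[OF ei(1)] 3 by simp
      moreover have "xt e (hV v) < xt f (hV v) \<longleftrightarrow> xt e (ys (k-1)) < xt f (ys (k-1))"
        by (rule sp_strip[OF k ei(1) fi(1) ne]) (use 3 vp ei fi Sv in auto)
      ultimately show ?thesis by simp
    next
      case 4
      have "xt e (hV v) \<noteq> fst (pV v)"
      proof
        assume "xt e (hV v) = fst (pV v)"
        then have "pV v = (xt e (hV v), hV v)" by (metis prod.collapse)
        then show False using vert_on[OF ei(1) vp[THEN conjunct1], of "hV v"] 4 ei Sv vp by auto
      qed
      then have "xt e (hV v) < fst (pV v)" using lx Sv ei(3) 4 lhv unfolding canon_key_def lex_less_def by auto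
      moreover have "xt f (hV v) = fst (pV v)" using xat_tgt[OF fi(1)] 4 by simp
      moreover have "xt e (hV v) < xt f (hV v) \<longleftrightarrow> xt e (ys (k-1)) < xt f (ys (k-1))"
        by (rule sp_strip[OF k ei(1) fi(1) ne]) (use 4 vp ei fi Sv in auto)
      ultimately show ?thesis by simp
    qed
  qed
qed

lemma GB: assumes k: "1 \<le> k" "k < n" and e: "e \<in> Cc k" and f: "f \<in> Cc k"
  and lx: "lex_less (key k e) (key k f)"
  shows "xt e (ys k) < xt f (ys k)"
proof -
  have kn: "k \<le> n" using k by auto
  have ne: "e \<noteq> f" using lx lex_irrefl by metis
  note ei = out_span[OF k e] and fi = out_span[OF k f]
  have ykk: "ys k < ys (k-1)" using ys_mono[of "k-1" k] k by auto
  show ?thesis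
  proof (cases "S k = {}")
    case True
    then have "xt e (ys (k-1)) < xt f (ys (k-1))"
      using lx lh_empty[OF True] unfolding canon_key_def lex_less_def by auto
    moreover have "xt e (ys k) < xt f (ys k) \<longleftrightarrow> xt e (ys (k-1)) < xt f (ys (k-1))"
      by (rule sp_strip[OF k(1) kn ei(1) fi(1) ne]) (use True ei fi ykk in auto)
    ultimately show ?thesis by simp
  next
    case False
    then obtain v where v: "v \<in> S k" by auto
    note vp = S_props[OF v k(1) kn]
    have Sv: "\<And>w. w \<in> S k \<longleftrightarrow> w = v" using S_unique[OF k(1) kn v] v by blast
    have lhv: "layer_height G pV ys k = hV v" using lh_v[OF k(1) kn v] .
    consider "src G e = v" "src G f = v" | "src G e \<noteq> v" "src G f \<noteq> v" | "src G e = v" "src G f \<noteq> v"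
      | "src G e \<noteq> v" "src G f = v" by blast
    then show ?thesis
    proof cases
      case 1
      then show ?thesis using lx Sv ei(3) fi(3) unfolding canon_key_def lex_less_def by auto
    next
      case 2
      then have "xt e (hV v) < xt f (hV v)" using lx Sv ei(3) fi(3) lhv unfolding canon_key_def lex_less_def by auto
      moreover have "xt e (ys k) < xt f (ys k) \<longleftrightarrow> xt e (hV v) < xt f (hV v)"
        by (rule sp_strip[OF k(1) kn ei(1) fi(1) ne]) (use 2 vp ei fi Sv in auto)
      ultimately show ?thesis by simp
    next
      case 3
      have "xt f (hV v) \<noteq> fst (pV v)"
      proof
        assume "xt f (hV v) = fst (pV v)"
        then have "pV v = (xt f (hV v), hV v)" by (metis prod.collapse)
        then show False using vert_on[OF fi(1) vp[THEN conjunct1], of "hV v"] 3 fi Sv vp by auto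
      qed
      then have "fst (pV v) < xt f (hV v)" using lx Sv fi(3) ei(3) 3 lhv unfolding canon_key_def lex_less_def by auto
      moreover have "xt e (hV v) = fst (pV v)" using xat_src[OF ei(1)] 3 by simp
      moreover have "xt e (ys k) < xt f (ys k) \<longleftrightarrow> xt e (hV v) < xt f (hV v)"
        by (rule sp_strip[OF k(1) kn ei(1) fi(1) ne]) (use 3 vp ei fi Sv h_edge[OF ei(1)] in auto)
      ultimately show ?thesis by simp
    next
      case 4
      have "xt e (hV v) \<noteq> fst (pV v)"
      proof
        assume "xt e (hV v) = fst (pV v)"
        then have "pV v = (xt e (hV v), hV v)" by (metis prod.collapse)
        then show False using vert_on[OF ei(1) vp[THEN conjunct1], of "hV v"] 4 ei Sv vp by auto
      qed
      then have "xt e (hV v) < fst (pV v)" using lx Sv ei(3) fi(3) 4 lhv unfolding canon_key_def lex_less_def by auto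
      moreover have "xt f (hV v) = fst (pV v)" using xat_src[OF fi(1)] 4 by simp
      moreover have "xt e (ys k) < xt f (ys k) \<longleftrightarrow> xt e (hV v) < xt f (hV v)"
        by (rule sp_strip[OF k(1) kn ei(1) fi(1) ne]) (use 4 vp ei fi Sv h_edge[OF fi(1)] in auto)
      ultimately show ?thesis by simp
    qed
  qed
qed

end


lemma prec_app: "list_prec L x y \<longleftrightarrow> (\<exists>us vs ws. L = us @ x # vs @ y # ws)"
proof
  assume "list_prec L x y"
  then obtain i k where ik: "i < k" "k < length L" "L ! i = x" "L ! k = y" unfolding list_prec_def by auto
  define us where "us = take i L"
  define vs where "vs = take (k - Suc i) (drop (Suc i) L)"
  define ws where "ws = drop (Suc k) L"
  have il: "i < length L" using ik by auto
  have "L = take i L @ L ! i # drop (Suc i) L" using id_take_nth_drop[OF il] .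
  moreover have "drop (Suc i) L = vs @ L ! k # ws"
  proof -
    have "drop (Suc i) L = take (k - Suc i) (drop (Suc i) L) @ drop (k - Suc i) (drop (Suc i) L)"
      by (rule append_take_drop_id[symmetric])
    moreover have "drop (k - Suc i) (drop (Suc i) L) = L ! k # ws"
      using ik Cons_nth_drop_Suc[of k L] unfolding ws_def by simp
    ultimately show ?thesis unfolding vs_def by simp
  qed
  ultimately show "\<exists>us vs ws. L = us @ x # vs @ y # ws" using ik by metis
next
  assume "\<exists>us vs ws. L = us @ x # vs @ y # ws"
  then obtain us vs ws where L: "L = us @ x # vs @ y # ws" by blast
  show "list_prec L x y" unfolding list_prec_def
    by (rule exI[of _ "length us"], rule exI[of _ "length us + Suc (length vs)"]) (auto simp: L nth_append)
qed

lemma prec_mem: "list_prec L x y \<Longrightarrow> x \<in> set L \<and> y \<in> set L"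
  unfolding list_prec_def by auto

lemma prec_XY: "x \<in> set X \<Longrightarrow> y \<in> set Y \<Longrightarrow> list_prec (X @ Y) x y"
proof -
  assume "x \<in> set X" "y \<in> set Y"
  then obtain a b c d where "X = a @ x # b" "Y = c @ y # d" by (metis split_list)
  then show ?thesis unfolding prec_app by (rule_tac x=a in exI, rule_tac x="b @ c" in exI) auto
qed

lemma prec_idx: "distinct L \<Longrightarrow> i < length L \<Longrightarrow> k < length L \<Longrightarrow> list_prec L (L ! i) (L ! k) \<longleftrightarrow> i < k"
  unfolding list_prec_def by (auto simp: nth_eq_iff_index_eq)

lemma prec_asym: "distinct L \<Longrightarrow> list_prec L x y \<Longrightarrow> \<not> list_prec L y x"
  unfolding list_prec_def by (auto simp: nth_eq_iff_index_eq)

lemma prec_irrefl: "distinct L \<Longrightarrow> \<not> list_prec L x x"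
  unfolding list_prec_def by (auto simp: nth_eq_iff_index_eq)

lemma prec_total: "distinct L \<Longrightarrow> x \<in> set L \<Longrightarrow> y \<in> set L \<Longrightarrow> x \<noteq> y \<Longrightarrow> list_prec L x y \<or> list_prec L y x"
  unfolding list_prec_def in_set_conv_nth by (metis linorder_neqE_nat)

lemma prec_trans: assumes d: "distinct L" and a: "list_prec L x y" and b: "list_prec L y z" shows "list_prec L x z"
proof -
  obtain i k where 1: "i < k" "k < length L" "L ! i = x" "L ! k = y" using a unfolding list_prec_def by auto
  obtain k' l where 2: "k' < l" "l < length L" "L ! k' = y" "L ! l = z" using b unfolding list_prec_def by auto
  have "k' < length L" using 2 by auto
  then have "k = k'" using nth_eq_iff_index_eq[OF d, of k k'] 1 2 by auto
  then show ?thesis unfolding list_prec_def using 1 2 by (intro exI[of _ i] exI[of _ l]) auto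
qed

lemma prec_filter1: "list_prec L x y \<Longrightarrow> P x \<Longrightarrow> P y \<Longrightarrow> list_prec (filter P L) x y"
  unfolding prec_app by force

lemma prec_filter: "distinct L \<Longrightarrow> list_prec (filter P L) x y \<longleftrightarrow> list_prec L x y \<and> P x \<and> P y"
proof
  assume d: "distinct L" and p: "list_prec (filter P L) x y"
  then have m: "x \<in> set L" "y \<in> set L" "P x" "P y" using prec_mem[OF p] by auto
  have df: "distinct (filter P L)" using d by simp
  have "x \<noteq> y" using p prec_irrefl[OF df] by auto
  moreover have "\<not> list_prec L y x" using prec_filter1[of L y x P] m p prec_asym[OF df] by auto
  ultimately show "list_prec L x y \<and> P x \<and> P y" using prec_total[OF d m(1,2)] m by auto
next
  assume "list_prec L x y \<and> P x \<and> P y" then show "list_prec (filter P L) x y" using prec_filter1 by auto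
qed

lemma sorted_eq:
  fixes g :: "'a \<Rightarrow> real"
  assumes "sorted_wrt (\<lambda>e f. g e < g f) xs" "sorted_wrt (\<lambda>e f. g e < g f) ys" "set xs = set ys"
  shows "xs = ys"
proof -
  have a: "sorted_wrt (<) (map g xs)" "sorted_wrt (<) (map g ys)" using assms by (auto simp: sorted_wrt_map)
  then have "map g xs = map g ys" using strict_sorted_equal[OF a] assms(3) by auto
  moreover have "distinct (map g xs)" using a strict_sorted_iff by auto
  then have "inj_on g (set xs \<union> set ys)" using assms(3) distinct_map[of g xs] by simp
  ultimately show ?thesis using inj_on_map_eq_map by blast
qed

lemma sorted_split: "sorted (map \<rho> xs) \<Longrightarrow> xs = filter (\<lambda>x. \<rho> x < (t::nat)) xs @ filter (\<lambda>x. t \<le> \<rho> x) xs"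
proof (induction xs)
  case Nil then show ?case by simp
next
  case (Cons x xs)
  show ?case
  proof (cases "\<rho> x < t")
    case True then show ?thesis using Cons by auto
  next
    case False
    then have "\<forall>y\<in>set xs. t \<le> \<rho> y" using Cons.prems by auto
    then have "filter (\<lambda>x. \<rho> x < t) xs = []" "filter (\<lambda>x. t \<le> \<rho> x) xs = xs"
      by (auto simp: filter_empty_conv filter_id_conv not_less)
    then show ?thesis using False by auto
  qed
qed

lemma sorted_split4: assumes "sorted (map \<rho> xs)" "\<forall>x\<in>set xs. \<rho> x \<le> (3::nat)"
  shows "xs = filter (\<lambda>x. \<rho> x = 0) xs @ filter (\<lambda>x. \<rho> x = 1) xs @ filter (\<lambda>x. \<rho> x = 2) xs @ filter (\<lambda>x. \<rho> x = 3) xs"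
proof -
  have s1: "xs = filter (\<lambda>x. \<rho> x < 1) xs @ filter (\<lambda>x. 1 \<le> \<rho> x) xs" using sorted_split[OF assms(1)] .
  have "sorted (map \<rho> (filter (\<lambda>x. 1 \<le> \<rho> x) xs))" using assms(1) by (simp add: sorted_filter)
  then have s2: "filter (\<lambda>x. 1 \<le> \<rho> x) xs = filter (\<lambda>x. \<rho> x < 2) (filter (\<lambda>x. 1 \<le> \<rho> x) xs) @ filter (\<lambda>x. 2 \<le> \<rho> x) (filter (\<lambda>x. 1 \<le> \<rho> x) xs)"
    using sorted_split by blast
  have "sorted (map \<rho> (filter (\<lambda>x. 2 \<le> \<rho> x) xs))" using assms(1) by (simp add: sorted_filter)
  then have s3: "filter (\<lambda>x. 2 \<le> \<rho> x) xs = filter (\<lambda>x. \<rho> x < 3) (filter (\<lambda>x. 2 \<le> \<rho> x) xs) @ filter (\<lambda>x. 3 \<le> \<rho> x) (filter (\<lambda>x. 2 \<le> \<rho> x) xs)"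
    using sorted_split by blast
  have e1: "filter (\<lambda>x. \<rho> x < 1) xs = filter (\<lambda>x. \<rho> x = 0) xs" by (rule filter_cong) auto
  have e2: "filter (\<lambda>x. \<rho> x < 2) (filter (\<lambda>x. 1 \<le> \<rho> x) xs) = filter (\<lambda>x. \<rho> x = 1) xs"
    by (simp add: filter_filter) (rule filter_cong, auto)
  have e3: "filter (\<lambda>x. 2 \<le> \<rho> x) (filter (\<lambda>x. 1 \<le> \<rho> x) xs) = filter (\<lambda>x. 2 \<le> \<rho> x) xs"
    by (simp add: filter_filter) (rule filter_cong, auto)
  have e4: "filter (\<lambda>x. \<rho> x < 3) (filter (\<lambda>x. 2 \<le> \<rho> x) xs) = filter (\<lambda>x. \<rho> x = 2) xs"
    by (simp add: filter_filter) (rule filter_cong, auto)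
  have e5: "filter (\<lambda>x. 3 \<le> \<rho> x) (filter (\<lambda>x. 2 \<le> \<rho> x) xs) = filter (\<lambda>x. \<rho> x = 3) xs"
    by (simp add: filter_filter) (rule filter_cong, use assms(2) in auto)
  show ?thesis using s1 s2 s3 e1 e2 e3 e4 e5 by metis
qed

fun expn :: "('e \<Rightarrow> bool) \<Rightarrow> 'e list \<Rightarrow> ('e \<times> 'e list) list \<Rightarrow> 'e list" where
  "expn Out [] bs = []"
| "expn Out (x # xs) bs = (if Out x then (case bs of [] \<Rightarrow> x # expn Out xs [] | (i, P) # bs' \<Rightarrow> x # P @ expn Out xs bs') else x # expn Out xs bs)"

lemma comp_expn: "filter Out L = map fst bs \<Longrightarrow> comp_list Out (map (\<lambda>e. (e, e)) L) bs = map (\<lambda>e. (e, e)) (expn Out L bs)"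
proof (induction L arbitrary: bs)
  case Nil then show ?case by simp
next
  case (Cons x xs)
  show ?case
  proof (cases "Out x")
    case True
    then obtain P bs' where bs: "bs = (x, P) # bs'" "filter Out xs = map fst bs'" using Cons.prems by (cases bs) auto
    then show ?thesis using Cons.IH[OF bs(2)] True by simp
  next
    case False then show ?thesis using Cons by simp
  qed
qed

lemma expn_app: "filter Out L1 = map fst bs1 \<Longrightarrow> expn Out (L1 @ L2) (bs1 @ bs2) = expn Out L1 bs1 @ expn Out L2 bs2"
proof (induction L1 arbitrary: bs1)
  case Nil then show ?case by simp
next
  case (Cons x xs)
  show ?case
  proof (cases "Out x")
    case True
    then obtain P bs' where bs: "bs1 = (x, P) # bs'" "filter Out xs = map fst bs'" using Cons.prems by (cases bs1) auto
    then show ?thesis using Cons.IH[OF bs(2)] True by simp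
  next
    case False then show ?thesis using Cons by simp
  qed
qed

lemma expn_nil: "filter Out L = map fst bs \<Longrightarrow> \<forall>p\<in>set bs. snd p = [] \<Longrightarrow> expn Out L bs = L"
proof (induction L arbitrary: bs)
  case Nil then show ?case by simp
next
  case (Cons x xs)
  show ?case
  proof (cases "Out x")
    case True
    then obtain P bs' where bs: "bs1 = (x, P) # bs'" "filter Out xs = map fst bs'" if "bs1 = bs" for bs1
      using Cons.prems by (cases bs) auto
    then show ?thesis using Cons.IH[OF bs(2)] True Cons.prems by auto
  next
    case False then show ?thesis using Cons by simp
  qed
qed

lemma blocks_fst: "map fst (blocks P M) = filter P M"
  by (induction M) auto

lemma blocks_app: "\<forall>x\<in>set X. P x \<Longrightarrow> (Z = [] \<or> P (hd Z)) \<Longrightarrow> blocks P (X @ Z) = map (\<lambda>x. (x, [])) X @ blocks P Z"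
proof (induction X)
  case Nil then show ?case by simp
next
  case (Cons x X)
  have "takeWhile (\<lambda>y. \<not> P y) (X @ Z) = []" using Cons.prems by (cases X; cases Z) auto
  then show ?case using Cons by simp
qed

lemma blocks_nonP: "\<forall>x\<in>set N. \<not> P x \<Longrightarrow> blocks P (N @ Z) = blocks P Z"
  by (induction N) auto

lemma tw_nonP: "\<forall>x\<in>set N. \<not> P x \<Longrightarrow> (Z = [] \<or> P (hd Z)) \<Longrightarrow> takeWhile (\<lambda>y. \<not> P y) (N @ Z) = N"
  by (induction N) (cases Z; auto)+

lemma blocks_star: assumes "\<forall>x\<in>set X. P x" "P r" "\<forall>x\<in>set N. \<not> P x" "\<forall>x\<in>set Y. P x"
  shows "blocks P (X @ r # N @ Y) = map (\<lambda>x. (x, [])) X @ (r, N) # map (\<lambda>x. (x, [])) Y"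
proof -
  have hy: "Y = [] \<or> P (hd Y)" using assms(4) by (cases Y) auto
  have "blocks P (X @ r # N @ Y) = map (\<lambda>x. (x, [])) X @ blocks P (r # N @ Y)"
    using blocks_app[OF assms(1)] assms(2) by auto
  moreover have "blocks P (r # N @ Y) = (r, N) # blocks P Y"
    using tw_nonP[OF assms(3) hy] blocks_nonP[OF assms(3)] assms(2) by simp
  moreover have "blocks P Y = map (\<lambda>x. (x, [])) Y" using blocks_app[OF assms(4), of "[]"] by simp
  ultimately show ?thesis by simp
qed


definition P12 :: "('e \<Rightarrow> 'e \<Rightarrow> bool) \<Rightarrow> 'e list \<Rightarrow> bool" where
  "P12 R L \<longleftrightarrow> (\<forall>x z. R x z \<longrightarrow> x \<in> set L \<longrightarrow> z \<in> set L \<longrightarrow> list_prec L x z) \<and>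
     (\<forall>x y z. list_prec L x y \<and> list_prec L y z \<and> R x z \<longrightarrow> R x y \<or> R y z)"

lemma insert_planar:
  fixes R :: "'e \<Rightarrow> 'e \<Rightarrow> bool"
  assumes L: "L = A' @ r # B'" and L': "L' = A' @ r # N @ B'"
    and d: "distinct L'"
    and old: "P12 R L"
    and IC: "Iset \<subseteq> C" "C \<subseteq> set L" "r \<in> Iset"
    and h3: "\<forall>u\<in>C. \<forall>w\<in>Iset. list_prec L w u \<and> list_prec L u r \<longrightarrow> u \<in> Iset"
    and h4: "\<forall>w\<in>Iset. w = r \<or> list_prec L w r"
    and h5: "\<forall>u\<in>C. \<forall>z\<in>set L. \<not> R u z"
    and h6: "\<forall>y\<in>set L. y \<in> C \<or> (\<exists>u\<in>C. R y u)"
    and h7: "\<forall>x\<in>set N. \<forall>z. z \<in> set L \<or> z \<in> set N \<longrightarrow> \<not> R x z"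
    and h8: "\<forall>x\<in>set L. \<forall>z\<in>set N. R x z \<longleftrightarrow> (x \<in> Iset \<or> (\<exists>w\<in>Iset. R x w))"
  shows "P12 R L'"
proof -
  have dL: "distinct L" using d L L' by auto
  have sL': "set L' = set L \<union> set N" using L L' by auto
  have disj: "set L \<inter> set N = {}" using d L L' by auto
  have filt: "filter (\<lambda>e. e \<notin> set N) L' = L"
  proof -
    have "filter (\<lambda>e. e \<notin> set N) N = []" by (simp add: filter_empty_conv)
    moreover have "filter (\<lambda>e. e \<notin> set N) A' = A'" "filter (\<lambda>e. e \<notin> set N) B' = B'" "r \<notin> set N"
      using d L' by (auto simp: filter_id_conv)
    ultimately show ?thesis using L L' by simp
  qed
  have p1: "list_prec L' x y \<longleftrightarrow> list_prec L x y" if "x \<in> set L" "y \<in> set L" for x y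
    using prec_filter[OF d, of "\<lambda>e. e \<notin> set N" x y] filt that disj by auto
  have rL: "r \<in> set L" using L by auto
  have pr: "list_prec L x r \<longleftrightarrow> x \<in> set A'" if "x \<in> set L" for x
  proof
    assume a: "list_prec L x r"
    show "x \<in> set A'"
    proof (rule ccontr)
      assume "x \<notin> set A'"
      moreover have "x \<noteq> r" using a prec_irrefl[OF dL] by auto
      ultimately have "x \<in> set B'" using that L by auto
      then have "list_prec L r x" using prec_XY[of r "A' @ [r]" x B'] L by auto
      then show False using a prec_asym[OF dL] by auto
    qed
  next
    assume "x \<in> set A'" then show "list_prec L x r" using prec_XY[of x A' r "r # B'"] L by auto
  qed
  have p2: "list_prec L' x z \<longleftrightarrow> x = r \<or> list_prec L x r" if "x \<in> set L" "z \<in> set N" for x z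
  proof
    assume a: "list_prec L' x z"
    show "x = r \<or> list_prec L x r"
    proof (rule ccontr)
      assume "\<not> (x = r \<or> list_prec L x r)"
      then have "x \<in> set B'" using pr that L by auto
      then have "list_prec L' z x" using prec_XY[of z "A' @ r # N" x B'] L' that by auto
      then show False using a prec_asym[OF d] by auto
    qed
  next
    assume "x = r \<or> list_prec L x r"
    then have "x \<in> set (A' @ [r])" using pr that by auto
    then show "list_prec L' x z" using prec_XY[of x "A' @ [r]" z "N @ B'"] L' that by auto
  qed
  have p3: "list_prec L' z y \<longleftrightarrow> list_prec L r y" if "y \<in> set L" "z \<in> set N" for y z
  proof -
    have yz: "y \<noteq> z" using that disj by auto
    have "list_prec L' z y \<longleftrightarrow> \<not> list_prec L' y z"
      using prec_total[OF d, of y z] prec_asym[OF d, of y z] yz that sL' by auto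
    also have "\<dots> \<longleftrightarrow> \<not> (y = r \<or> list_prec L y r)" using p2 that by auto
    also have "\<dots> \<longleftrightarrow> list_prec L r y"
      using prec_total[OF dL, of y r] prec_asym[OF dL, of r y] prec_irrefl[OF dL] that rL by auto
    finally show ?thesis .
  qed
  have oP1: "\<And>x z. R x z \<Longrightarrow> x \<in> set L \<Longrightarrow> z \<in> set L \<Longrightarrow> list_prec L x z" using old unfolding P12_def by blast
  have oP2: "\<And>x y z. list_prec L x y \<Longrightarrow> list_prec L y z \<Longrightarrow> R x z \<Longrightarrow> R x y \<or> R y z" using old unfolding P12_def by blast
  have IL: "Iset \<subseteq> set L" using IC by auto
  have toR: "x = r \<or> list_prec L x r" if "x \<in> set L" "x \<in> Iset \<or> (\<exists>w\<in>Iset. R x w)" for x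
    using that(2)
  proof
    assume "x \<in> Iset" then show ?thesis using h4 by auto
  next
    assume "\<exists>w\<in>Iset. R x w"
    then obtain w where w: "w \<in> Iset" "R x w" by blast
    then have "list_prec L x w" using oP1 that(1) IL by auto
    moreover have "w = r \<or> list_prec L w r" using h4 w by auto
    ultimately show ?thesis using prec_trans[OF dL, of x w r] by auto
  qed
  show ?thesis unfolding P12_def
  proof (intro conjI allI impI)
    fix x z assume R: "R x z" and x: "x \<in> set L'" and z: "z \<in> set L'"
    consider "x \<in> set N" | "x \<in> set L" "z \<in> set L" | "x \<in> set L" "z \<in> set N" using x z sL' by auto
    then show "list_prec L' x z"
    proof cases
      case 1 then show ?thesis using h7 R z sL' by auto
    next
      case 2 then show ?thesis using p1 oP1 R by auto
    next
      case 3 then show ?thesis using p2 toR h8 R by auto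
    qed
  next
    fix x y z assume a: "list_prec L' x y \<and> list_prec L' y z \<and> R x z"
    then have xyz: "x \<in> set L'" "y \<in> set L'" "z \<in> set L'" using prec_mem[of L' x y] prec_mem[of L' y z] by auto
    show "R x y \<or> R y z"
    proof (rule ccontr)
      assume nR: "\<not> (R x y \<or> R y z)"
      have xL: "x \<in> set L" using h7 a xyz sL' by auto
      consider "y \<in> set N" "z \<in> set N" | "y \<in> set L" "z \<in> set N" | "y \<in> set L" "z \<in> set L"
        | "y \<in> set N" "z \<in> set L" using xyz sL' by auto
      then show False
      proof cases
        case 1
        then show False using h8 xL a nR by blast
      next
        case 2
        have Rxz: "x \<in> Iset \<or> (\<exists>w\<in>Iset. R x w)" using h8 xL 2 a by blast
        have nyI: "y \<notin> Iset" "\<not> (\<exists>w\<in>Iset. R y w)" using h8 2 nR by auto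
        have "y = r \<or> list_prec L y r" using p2 2 a by auto
        then have yr: "list_prec L y r" using nyI IC by auto
        have xy: "list_prec L x y" using p1 xL 2 a by auto
        obtain w0 where w0: "w0 \<in> Iset" "x = w0 \<or> R x w0" using Rxz by blast
        have "\<not> list_prec L y w0"
        proof
          assume yw: "list_prec L y w0"
          show False using w0(2)
          proof
            assume "x = w0" then show False using xy yw prec_asym[OF dL] by auto
          next
            assume "R x w0" then show False using oP2[OF xy yw] nR nyI w0 by auto
          qed
        qed
        moreover have "y \<noteq> w0" using nyI w0 by auto
        ultimately have w0y: "list_prec L w0 y" using prec_total[OF dL, of y w0] IL w0 2 by auto
        have "y \<in> C \<or> (\<exists>u\<in>C. R y u)" using h6 2 by auto
        then show False
        proof
          assume "y \<in> C" then show False using h3 w0y yr w0 nyI by blast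
        next
          assume "\<exists>u\<in>C. R y u"
          then obtain u where u: "u \<in> C" "R y u" by blast
          have uI: "u \<notin> Iset" using u nyI by auto
          have yu: "list_prec L y u" using oP1 u 2 IC by auto
          have "u \<noteq> r" using uI IC by auto
          moreover have "\<not> list_prec L r u"
          proof
            assume "list_prec L r u"
            then have "R y r \<or> R r u" using oP2[OF yr _ u(2)] by auto
            moreover have "r \<in> C" "u \<in> set L" using IC u by auto
            ultimately show False using nyI IC h5 by blast
          qed
          ultimately have "list_prec L u r" using prec_total[OF dL, of u r] IC u rL by auto
          moreover have "list_prec L w0 u" using prec_trans[OF dL w0y yu] .
          ultimately show False using h3 u w0 uI by blast
        qed
      next
        case 3
        then show False using p1 xL a nR oP2 by metis
      next
        case 4
        have nx: "x \<notin> Iset" "\<not> (\<exists>w\<in>Iset. R x w)" using h8 xL 4 nR by auto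
        have "x = r \<or> list_prec L x r" using p2 xL 4 a by auto
        then have xr: "list_prec L x r" using nx IC by auto
        have rz: "list_prec L r z" using p3 4 a by auto
        have "R x r \<or> R r z" using oP2[OF xr rz] a by auto
        then show False using nx IC h5 4 by auto
      qed
    qed
  qed
qed


lemma blocks_cong: "\<forall>x\<in>set M. P x = Q x \<Longrightarrow> blocks P M = blocks Q M"
proof (induction M)
  case Nil then show ?case by simp
next
  case (Cons x xs)
  have "takeWhile (\<lambda>y. \<not> P y) xs = takeWhile (\<lambda>y. \<not> Q y) xs"
    using Cons.prems by (induction xs) auto
  then show ?case using Cons by auto
qed

context LD begin

definition INV where
  "INV j L \<longleftrightarrow> distinct L \<and> set L = E j \<and> P12 (edge_reach G) L \<and>
     (j < n \<longrightarrow> sorted_wrt (\<lambda>e f. xt e (ys j) < xt f (ys j)) (filter (\<lambda>e. e \<in> Cc j) L))"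

lemma canon: assumes k: "1 \<le> k" "k \<le> n"
  shows "distinct (Ls k)" "set (Ls k) = layer_edges G pV ys k"
    "sorted_wrt (\<lambda>e f. lex_less (key k e) (key k f)) (Ls k)"
  using can k unfolding canonical_layer_order_def by auto

lemma in_sorted: assumes k: "1 \<le> k" "k \<le> n"
  shows "sorted_wrt (\<lambda>e f. xt e (ys (k-1)) < xt f (ys (k-1))) (filter (\<lambda>e. e \<in> Cc (k-1)) (Ls k))"
proof -
  have "sorted_wrt (\<lambda>e f. lex_less (key k e) (key k f)) (filter (\<lambda>e. e \<in> Cc (k-1)) (Ls k))"
    using sorted_wrt_filter canon(3)[OF k] by blast
  then show ?thesis by (rule sorted_wrt_mono_rel[rotated]) (use GA[OF k] in auto)
qed

lemma out_sorted: assumes k: "1 \<le> k" "k < n"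
  shows "sorted_wrt (\<lambda>e f. xt e (ys k) < xt f (ys k)) (filter (\<lambda>e. e \<in> Cc k) (Ls k))"
proof -
  have "sorted_wrt (\<lambda>e f. lex_less (key k e) (key k f)) (filter (\<lambda>e. e \<in> Cc k) (Ls k))"
    using sorted_wrt_filter canon(3) k by fastforce
  then show ?thesis by (rule sorted_wrt_mono_rel[rotated]) (use GB[OF k] in auto)
qed

lemma CcE: "Cc j \<subseteq> E j" unfolding Cc_def by auto

lemma Eedges: "E j \<subseteq> edges G" unfolding E_def by auto

lemma Ccedges: "e \<in> Cc j \<Longrightarrow> e \<in> edges G" unfolding Cc_def E_def by auto

lemma filterK: assumes k: "1 \<le> k" "k \<le> n" and I: "INV (k-1) L"
  shows "filter (\<lambda>e. e \<in> Cc (k-1)) L = filter (\<lambda>e. e \<in> Cc (k-1)) (Ls k)"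
proof (rule sorted_eq)
  show "sorted_wrt (\<lambda>e f. xt e (ys (k-1)) < xt f (ys (k-1))) (filter (\<lambda>e. e \<in> Cc (k-1)) L)"
    using I k unfolding INV_def by auto
  show "sorted_wrt (\<lambda>e f. xt e (ys (k-1)) < xt f (ys (k-1))) (filter (\<lambda>e. e \<in> Cc (k-1)) (Ls k))"
    using in_sorted[OF k] .
  show "set (filter (\<lambda>e. e \<in> Cc (k-1)) L) = set (filter (\<lambda>e. e \<in> Cc (k-1)) (Ls k))"
    using I CcE canon(2)[OF k] LE[OF k] unfolding INV_def by auto
qed

lemma tgt_v_in: assumes k: "1 \<le> k" "k \<le> n" and v: "v \<in> S k" and e: "e \<in> edges G" "tgt G e = v"
  shows "e \<in> Cc (k-1)"
proof -
  note vp = S_props[OF v k]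
  have "src G e \<notin> S k" using S_unique[OF k v, of "src G e"] no_loop[OF e(1)] e by auto
  moreover have "ys k < hV (src G e)" using h_edge[OF e(1)] e vp by auto
  ultimately have "ys (k-1) \<le> hV (src G e)" using above_strip[of "src G e" k] ends[OF e(1)] k by auto
  then show ?thesis using e vp unfolding Cc_def E_def by auto
qed

lemma decomp: assumes k: "1 \<le> k" "k \<le> n" and v: "v \<in> S k"
  shows "\<exists>A I N B. Ls k = A @ I @ N @ B \<and> I \<noteq> [] \<and>
    (\<forall>x\<in>set A \<union> set B. x \<in> Cc (k-1) \<and> tgt G x \<noteq> v) \<and>
    (\<forall>x\<in>set I. x \<in> Cc (k-1) \<and> tgt G x = v) \<and>
    (\<forall>x\<in>set N. x \<notin> Cc (k-1) \<and> tgt G x \<noteq> v \<and> src G x = v) \<and>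
    set I = {e \<in> edges G. tgt G e = v} \<and> set N = {e \<in> edges G. src G e = v}"
proof -
  note vp = S_props[OF v k]
  have Sv: "\<And>w. w \<in> S k \<longleftrightarrow> w = v" using S_unique[OF k v] v by blast
  have lhv: "layer_height G pV ys k = hV v" using lh_v[OF k v] .
  define X where "X = fst (pV v)"
  define \<rho> where "\<rho> = (\<lambda>e. if tgt G e = v then 1 else if src G e = v then 2
                           else if xt e (hV v) < X then 0 else (3::nat))"
  let ?M = "Ls k"
  have memM: "e \<in> set ?M \<longleftrightarrow> e \<in> Cc (k-1) \<or> (e \<in> edges G \<and> src G e = v)" for e
    using canon(2)[OF k] LE[OF k] Sv by auto
  have nonin: "xt e (hV v) \<noteq> X" if "e \<in> set ?M" "tgt G e \<noteq> v" "src G e \<noteq> v" for e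
  proof
    assume eq: "xt e (hV v) = X"
    have ec: "e \<in> Cc (k-1)" using memM that by auto
    note ei = in_span[OF k ec]
    have "pV v = (xt e (hV v), hV v)" using eq unfolding X_def by (metis prod.collapse)
    then show False using vert_on[OF ei(1) vp[THEN conjunct1], of "hV v"] that ei Sv vp by auto
  qed
  have mono: "\<rho> e \<le> \<rho> f" if "e \<in> set ?M" "f \<in> set ?M" "lex_less (key k e) (key k f)" for e f
  proof -
    have ke: "key k e = (if tgt G e = v then (X, 0, xt e (ys (k-1))) else if src G e = v then (X, 1, xt e (ys k))
        else (xt e (hV v), 0, 0))" for e
      unfolding canon_key_def X_def using Sv lhv by auto
    show ?thesis using that(3) nonin[OF that(1)] nonin[OF that(2)] no_loop
      unfolding ke \<rho>_def lex_less_def by (auto split: if_splits)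
  qed
  have srt: "sorted (map \<rho> ?M)"
    unfolding sorted_map by (rule sorted_wrt_mono_rel[OF _ canon(3)[OF k]]) (use mono in auto)
  have le3: "\<forall>x\<in>set ?M. \<rho> x \<le> 3" unfolding \<rho>_def by auto
  define A where "A = filter (\<lambda>x. \<rho> x = 0) ?M"
  define I where "I = filter (\<lambda>x. \<rho> x = 1) ?M"
  define N where "N = filter (\<lambda>x. \<rho> x = 2) ?M"
  define B where "B = filter (\<lambda>x. \<rho> x = 3) ?M"
  have eqM: "?M = A @ I @ N @ B" unfolding A_def I_def N_def B_def using sorted_split4[OF srt le3] .
  have r1: "\<rho> x = 1 \<longleftrightarrow> tgt G x = v" for x unfolding \<rho>_def by auto
  have r2: "\<rho> x = 2 \<longleftrightarrow> tgt G x \<noteq> v \<and> src G x = v" for x unfolding \<rho>_def by auto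
  have sI: "set I = {e \<in> edges G. tgt G e = v}"
    unfolding I_def using memM tgt_v_in[OF k v] r1 Ccedges by auto
  have sN: "set N = {e \<in> edges G. src G e = v}"
  proof -
    have "set N = {e \<in> set ?M. tgt G e \<noteq> v \<and> src G e = v}" unfolding N_def using r2 by auto
    also have "\<dots> = {e \<in> edges G. src G e = v}" using memM no_loop Ccedges by fastforce
    finally show ?thesis .
  qed
  have "I \<noteq> []" using internal_in[of v] vp sI by auto
  moreover have "\<forall>x\<in>set A \<union> set B. x \<in> Cc (k-1) \<and> tgt G x \<noteq> v"
    unfolding A_def B_def \<rho>_def using memM by (auto split: if_splits)
  moreover have "\<forall>x\<in>set I. x \<in> Cc (k-1) \<and> tgt G x = v"
    using sI tgt_v_in[OF k v] by auto
  moreover have "\<forall>x\<in>set N. x \<notin> Cc (k-1) \<and> tgt G x \<noteq> v \<and> src G x = v"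
  proof
    fix x assume x: "x \<in> set N"
    then have xe: "x \<in> edges G" "src G x = v" using sN by auto
    then have "src G x = v" "tgt G x \<noteq> v" using no_loop[OF xe(1)] by auto
    moreover have "x \<notin> Cc (k-1)" using in_span(3)[OF k, of x] \<open>src G x = v\<close> v by auto
    ultimately show "x \<notin> Cc (k-1) \<and> tgt G x \<noteq> v \<and> src G x = v" by auto
  qed
  ultimately show ?thesis using eqM sI sN by blast
qed

end

lemma mfst: "map fst (map (\<lambda>x. (x, [])) xs) = xs" by (induction xs) auto

context LD begin

lemma step:
  assumes k: "1 \<le> k" "k \<le> n" and I: "INV (k-1) L"
  shows "\<exists>L'. INV k L' \<and> (L = filter (\<lambda>e. e \<in> Cc (k-1)) (Ls k) \<longrightarrow> L' = Ls k) \<and>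
    (2 \<le> k \<longrightarrow> filter (layer_out G pV ys (k-1)) L = filter (layer_in G pV ys k) (Ls k) \<and>
       expn (layer_out G pV ys (k-1)) L (blocks (layer_in G pV ys k) (Ls k)) = L')"
proof -
  let ?M = "Ls k"
  have dL: "distinct L" and sL: "set L = E (k-1)" and oldP: "P12 (edge_reach G) L"
    using I unfolding INV_def by auto
  have K: "filter (\<lambda>e. e \<in> Cc (k-1)) L = filter (\<lambda>e. e \<in> Cc (k-1)) ?M" using filterK[OF k I] .
  have dM: "distinct ?M" using canon[OF k] by auto
  have fin: "filter (layer_in G pV ys k) ?M = filter (\<lambda>e. e \<in> Cc (k-1)) ?M"
    by (rule filter_cong) (use LI[OF k] in auto)
  have fout: "2 \<le> k \<Longrightarrow> filter (layer_out G pV ys (k-1)) L = filter (\<lambda>e. e \<in> Cc (k-1)) L"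
    by (rule filter_cong) (use LO[of "k-1"] k in auto)
  have bcong: "blocks (layer_in G pV ys k) ?M = blocks (\<lambda>e. e \<in> Cc (k-1)) ?M"
    by (rule blocks_cong) (use LI[OF k] in auto)
  show ?thesis
  proof (cases "S k = {}")
    case True
    have allin: "\<forall>x\<in>set ?M. x \<in> Cc (k-1)" using canon(2)[OF k] LE[OF k] True by auto
    have fM: "filter (\<lambda>e. e \<in> Cc (k-1)) ?M = ?M" using allin by (simp add: filter_id_conv)
    have Ek: "E k = E (k-1)" using E_step[OF k] True by auto
    have INVk: "INV k L" unfolding INV_def
    proof (intro conjI impI)
      show "distinct L" "set L = E k" "P12 (edge_reach G) L" using dL sL Ek oldP by auto
      assume kn: "k < n"
      have "filter (\<lambda>e. e \<in> Cc k) L = filter (\<lambda>e. e \<in> Cc (k-1)) L"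
        by (rule filter_cong) (use C_step[OF k(1) kn] True in auto)
      also have "\<dots> = ?M" using K fM by simp
      also have "\<dots> = filter (\<lambda>e. e \<in> Cc k) ?M"
        using allin C_step[OF k(1) kn] True by (simp add: filter_id_conv)
      finally show "sorted_wrt (\<lambda>e f. xt e (ys k) < xt f (ys k)) (filter (\<lambda>e. e \<in> Cc k) L)"
        using out_sorted[OF k(1) kn] by simp
    qed
    have bs: "blocks (\<lambda>e. e \<in> Cc (k-1)) ?M = map (\<lambda>x. (x, [])) ?M"
      using blocks_app[of ?M "\<lambda>e. e \<in> Cc (k-1)" "[]"] allin by auto
    have ex: "2 \<le> k \<longrightarrow> filter (layer_out G pV ys (k-1)) L = filter (layer_in G pV ys k) ?M \<and>
       expn (layer_out G pV ys (k-1)) L (blocks (layer_in G pV ys k) ?M) = L"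
    proof
      assume k2: "2 \<le> k"
      have f: "filter (layer_out G pV ys (k-1)) L = ?M" using fout[OF k2] K fM by simp
      show "filter (layer_out G pV ys (k-1)) L = filter (layer_in G pV ys k) ?M \<and>
       expn (layer_out G pV ys (k-1)) L (blocks (layer_in G pV ys k) ?M) = L"
      proof
        show "filter (layer_out G pV ys (k-1)) L = filter (layer_in G pV ys k) ?M" using f fin fM by simp
        have m: "map fst (map (\<lambda>x. (x, [])) ?M) = ?M" by (simp add: comp_def)
        have "filter (layer_out G pV ys (k-1)) L = map fst (map (\<lambda>x. (x, [])) ?M)" unfolding m by (rule f)
        moreover have "\<forall>p\<in>set (map (\<lambda>x. (x, [])) ?M). snd p = []" by simp
        ultimately have "expn (layer_out G pV ys (k-1)) L (map (\<lambda>x. (x, [])) ?M) = L"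
          by (rule expn_nil)
        then show "expn (layer_out G pV ys (k-1)) L (blocks (layer_in G pV ys k) ?M) = L"
          using bcong bs by simp
      qed
    qed
    show ?thesis using INVk ex fM by auto
  next
    case False
    then obtain v where v: "v \<in> S k" by auto
    note vp = S_props[OF v k]
    have Sv: "\<And>w. w \<in> S k \<longleftrightarrow> w = v" using S_unique[OF k v] v by blast
    obtain A Is N B where D: "?M = A @ Is @ N @ B" "Is \<noteq> []"
      "\<forall>x\<in>set A \<union> set B. x \<in> Cc (k-1) \<and> tgt G x \<noteq> v"
      "\<forall>x\<in>set Is. x \<in> Cc (k-1) \<and> tgt G x = v"
      "\<forall>x\<in>set N. x \<notin> Cc (k-1) \<and> tgt G x \<noteq> v \<and> src G x = v"
      "set Is = {e \<in> edges G. tgt G e = v}" "set N = {e \<in> edges G. src G e = v}"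
      using decomp[OF k v] by blast
    define I0 where "I0 = butlast Is"
    define r where "r = last Is"
    have Isr: "Is = I0 @ [r]" unfolding I0_def r_def using D(2) by simp
    have rI: "r \<in> set Is" using Isr by auto
    have rC: "r \<in> Cc (k-1)" "tgt G r = v" using D(4) rI by auto
    have fM: "filter (\<lambda>e. e \<in> Cc (k-1)) ?M = A @ Is @ B"
    proof -
      have "filter (\<lambda>e. e \<in> Cc (k-1)) A = A" "filter (\<lambda>e. e \<in> Cc (k-1)) B = B"
        "filter (\<lambda>e. e \<in> Cc (k-1)) Is = Is" "filter (\<lambda>e. e \<in> Cc (k-1)) N = []"
        using D(3,4,5) by (auto simp: filter_id_conv filter_empty_conv)
      then show ?thesis unfolding D(1) by simp
    qed
    have Kd: "filter (\<lambda>e. e \<in> Cc (k-1)) L = (A @ I0) @ r # B" using K fM Isr by simp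
    have dK: "distinct ((A @ I0) @ r # B)" using Kd[symmetric] dL by simp
    have rL: "r \<in> set L" using rC sL CcE by auto
    obtain A' B' where L: "L = A' @ r # B'" using split_list[OF rL] by blast
    have fL: "filter (\<lambda>e. e \<in> Cc (k-1)) L = filter (\<lambda>e. e \<in> Cc (k-1)) A' @ r # filter (\<lambda>e. e \<in> Cc (k-1)) B'"
      using L rC by simp
    have rA': "r \<notin> set A'" "r \<notin> set B'" using dL L by auto
    have eqf: "filter (\<lambda>e. e \<in> Cc (k-1)) A' @ r # filter (\<lambda>e. e \<in> Cc (k-1)) B' = (A @ I0) @ r # B"
      using Kd fL by simp
    have r1: "r \<notin> set (filter (\<lambda>e. e \<in> Cc (k-1)) A')" "r \<notin> set (filter (\<lambda>e. e \<in> Cc (k-1)) B')"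
      using rA' by auto
    have fA': "filter (\<lambda>e. e \<in> Cc (k-1)) A' = A @ I0" and fB': "filter (\<lambda>e. e \<in> Cc (k-1)) B' = B"
      using append_Cons_eq_iff[OF r1, of "A @ I0" B] eqf by blast+
    define L' where "L' = A' @ r # N @ B'"
    have NE: "set N \<inter> E (k-1) = {}"
    proof -
      have "x \<notin> E (k-1)" if "x \<in> set N" for x
        using that D(7) vp unfolding E_def by auto
      then show ?thesis by auto
    qed
    have dN: "distinct N" using dM D(1) by simp
    have dL': "distinct L'" using dL dN NE sL L unfolding L'_def by auto
    have sL': "set L' = E k"
    proof -
      have "set L' = E (k-1) \<union> set N" using sL L unfolding L'_def by auto
      also have "\<dots> = E k" using E_step[OF k] D(7) Sv by auto
      finally show ?thesis .
    qed
    have IsE: "set Is \<subseteq> Cc (k-1)" using D(4) by auto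
    have PL': "P12 (edge_reach G) L'"
    proof (rule insert_planar[OF L L'_def dL' oldP IsE _ rI])
      show "Cc (k-1) \<subseteq> set L" using sL CcE by auto
      show "\<forall>u\<in>Cc (k-1). \<forall>w\<in>set Is. list_prec L w u \<and> list_prec L u r \<longrightarrow> u \<in> set Is"
      proof (intro ballI impI)
        fix u w assume u: "u \<in> Cc (k-1)" and w: "w \<in> set Is" and p: "list_prec L w u \<and> list_prec L u r"
        let ?K = "(A @ I0) @ r # B"
        have pK: "list_prec ?K w u" "list_prec ?K u r"
          using p prec_filter[OF dL, of "\<lambda>e. e \<in> Cc (k-1)"] u rC IsE w Kd by auto
        have uK: "u \<in> set ?K" using pK prec_mem by metis
        show "u \<in> set Is"
        proof (rule ccontr)
          assume nu: "u \<notin> set Is"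
          then consider "u \<in> set A" | "u \<in> set B" using uK Isr by auto
          then show False
          proof cases
            case 1
            have "list_prec ?K u w" using prec_XY[of u A w "I0 @ r # B"] 1 w Isr by auto
            then show False using pK prec_asym[OF dK] by auto
          next
            case 2
            have "list_prec ?K r u" using prec_XY[of r "A @ I0 @ [r]" u B] 2 by auto
            then show False using pK prec_asym[OF dK] by auto
          qed
        qed
      qed
      show "\<forall>w\<in>set Is. w = r \<or> list_prec L w r"
      proof
        fix w assume w: "w \<in> set Is"
        show "w = r \<or> list_prec L w r"
        proof (cases "w = r")
          case False
          then have "w \<in> set I0" using w Isr by auto
          then have "list_prec ((A @ I0) @ r # B) w r" using prec_XY[of w "A @ I0" r "r # B"] by auto
          then show ?thesis using prec_filter[OF dL, of "\<lambda>e. e \<in> Cc (k-1)"] Kd by auto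
        qed simp
      qed
      show "\<forall>u\<in>Cc (k-1). \<forall>z\<in>set L. \<not> edge_reach G u z" using cut_noreach sL by auto
      show "\<forall>y\<in>set L. y \<in> Cc (k-1) \<or> (\<exists>u\<in>Cc (k-1). edge_reach G y u)"
        using reach_out[of "k-1"] k sL by auto
      show "\<forall>x\<in>set N. \<forall>z. z \<in> set L \<or> z \<in> set N \<longrightarrow> \<not> edge_reach G x z"
      proof (intro ballI allI impI)
        fix x z assume x: "x \<in> set N" and z: "z \<in> set L \<or> z \<in> set N"
        have "z \<in> E k" using z sL' unfolding L'_def using L by auto
        then show "\<not> edge_reach G x z" using new_noreach[OF k, of x z] x D(7) v by auto
      qed
      show "\<forall>x\<in>set L. \<forall>z\<in>set N. edge_reach G x z \<longleftrightarrow> (x \<in> set Is \<or> (\<exists>w\<in>set Is. edge_reach G x w))"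
      proof (intro ballI)
        fix x z assume x: "x \<in> set L" and z: "z \<in> set N"
        have xe: "x \<in> edges G" using x sL Eedges by auto
        have ze: "z \<in> edges G" "src G z = v" using z D(7) by auto
        show "edge_reach G x z \<longleftrightarrow> (x \<in> set Is \<or> (\<exists>w\<in>set Is. edge_reach G x w))"
        proof
          assume "edge_reach G x z"
          then have "tgt G x = v \<or> (\<exists>w. edge_reach G x w \<and> tgt G w = v)" using reach_v[OF xe ze(1)] ze(2) by simp
          then show "x \<in> set Is \<or> (\<exists>w\<in>set Is. edge_reach G x w)"
          proof
            assume "tgt G x = v" then show ?thesis using xe D(6) by simp
          next
            assume "\<exists>w. edge_reach G x w \<and> tgt G w = v"
            then obtain w where w: "edge_reach G x w" "tgt G w = v" by blast
            then have "w \<in> set Is" using reach_h[OF w(1)] D(6) by simp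
            then show ?thesis using w by blast
          qed
        next
          assume "x \<in> set Is \<or> (\<exists>w\<in>set Is. edge_reach G x w)"
          then have "tgt G x = v \<or> (\<exists>w. edge_reach G x w \<and> tgt G w = v)" using D(6) by auto
          then show "edge_reach G x z" using reach_v[OF xe ze(1)] ze(2) by simp
        qed
      qed
    qed
    have INVk: "INV k L'" unfolding INV_def
    proof (intro conjI impI)
      show "distinct L'" "set L' = E k" "P12 (edge_reach G) L'" using dL' sL' PL' by auto
      assume kn: "k < n"
      have ck: "e \<in> Cc k \<longleftrightarrow> e \<in> Cc (k-1) \<and> tgt G e \<noteq> v" if "e \<in> E (k-1)" for e
      proof -
        have "src G e \<notin> S k" using that vp Sv unfolding E_def by auto
        then show ?thesis using C_step[OF k(1) kn, of e] Sv by auto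
      qed
      have fA: "filter (\<lambda>e. e \<in> Cc k) A' = A"
      proof -
        have "filter (\<lambda>e. e \<in> Cc k) A' = filter (\<lambda>e. tgt G e \<noteq> v) (filter (\<lambda>e. e \<in> Cc (k-1)) A')"
          unfolding filter_filter by (rule filter_cong) (use ck sL L in auto)
        also have "\<dots> = A" using fA' D(3) D(4) Isr by (simp add: filter_id_conv filter_empty_conv)
        finally show ?thesis .
      qed
      have fB: "filter (\<lambda>e. e \<in> Cc k) B' = B"
      proof -
        have "filter (\<lambda>e. e \<in> Cc k) B' = filter (\<lambda>e. tgt G e \<noteq> v) (filter (\<lambda>e. e \<in> Cc (k-1)) B')"
          unfolding filter_filter by (rule filter_cong) (use ck sL L in auto)
        also have "\<dots> = B" using fB' D(3) by (simp add: filter_id_conv)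
        finally show ?thesis .
      qed
      have Nk: "\<forall>x\<in>set N. x \<in> Cc k" using C_step[OF k(1) kn] D(7) Sv by auto
      have rk: "r \<notin> Cc k" using rC vp unfolding Cc_def by auto
      have "filter (\<lambda>e. e \<in> Cc k) L' = A @ N @ B"
        unfolding L'_def using fA fB Nk rk by (simp add: filter_id_conv)
      also have "\<dots> = filter (\<lambda>e. e \<in> Cc k) ?M"
      proof -
        have "\<forall>x\<in>set A \<union> set B. x \<in> Cc k" using D(3) ck CcE by auto
        moreover have "\<forall>x\<in>set Is. x \<notin> Cc k" using D(4) ck CcE by auto
        ultimately show ?thesis using D(1) Nk by (simp add: filter_id_conv filter_empty_conv)
      qed
      finally show "sorted_wrt (\<lambda>e f. xt e (ys k) < xt f (ys k)) (filter (\<lambda>e. e \<in> Cc k) L')"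
        using out_sorted[OF k(1) kn] by simp
    qed
    have first: "L = filter (\<lambda>e. e \<in> Cc (k-1)) ?M \<longrightarrow> L' = ?M"
    proof
      assume "L = filter (\<lambda>e. e \<in> Cc (k-1)) ?M"
      then have "A' @ r # B' = (A @ I0) @ r # B" using L fM Isr by simp
      then have "A' = A @ I0" "B' = B" using append_Cons_eq_iff[OF rA', of "A @ I0" B] by blast+
      then show "L' = ?M" unfolding L'_def using D(1) Isr by simp
    qed
    have second: "2 \<le> k \<longrightarrow> filter (layer_out G pV ys (k-1)) L = filter (layer_in G pV ys k) ?M \<and>
       expn (layer_out G pV ys (k-1)) L (blocks (layer_in G pV ys k) ?M) = L'"
    proof
      assume k2: "2 \<le> k"
      let ?O = "layer_out G pV ys (k-1)"
      have f1: "filter ?O L = filter (layer_in G pV ys k) ?M" using fout[OF k2] K fin by simp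
      have Oc: "\<forall>x\<in>set L. ?O x \<longleftrightarrow> x \<in> Cc (k-1)" using LO[of "k-1"] k k2 by auto
      have bs: "blocks (layer_in G pV ys k) ?M = map (\<lambda>x. (x, [])) (A @ I0) @ (r, N) # map (\<lambda>x. (x, [])) B"
      proof -
        have "blocks (\<lambda>e. e \<in> Cc (k-1)) ((A @ I0) @ r # N @ B) = map (\<lambda>x. (x, [])) (A @ I0) @ (r, N) # map (\<lambda>x. (x, [])) B"
        proof (rule blocks_star)
          show "\<forall>x\<in>set (A @ I0). x \<in> Cc (k-1)" using D(3) D(4) Isr by auto
          show "r \<in> Cc (k-1)" using rC by simp
          show "\<forall>x\<in>set N. x \<notin> Cc (k-1)" using D(5) by simp
          show "\<forall>x\<in>set B. x \<in> Cc (k-1)" using D(3) by simp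
        qed
        moreover have "?M = (A @ I0) @ r # N @ B" using D(1) Isr by simp
        ultimately show ?thesis using bcong by simp
      qed
      have fOA: "filter ?O A' = map fst (map (\<lambda>x. (x, [])) (A @ I0))"
      proof -
        have "filter ?O A' = filter (\<lambda>e. e \<in> Cc (k-1)) A'" by (rule filter_cong) (use Oc L in auto)
        then show ?thesis unfolding mfst using fA' by simp
      qed
      have fOB: "filter ?O B' = map fst (map (\<lambda>x. (x, [])) B)"
      proof -
        have "filter ?O B' = filter (\<lambda>e. e \<in> Cc (k-1)) B'" by (rule filter_cong) (use Oc L in auto)
        then show ?thesis unfolding mfst using fB' by simp
      qed
      have Or: "?O r" using Oc rC rL by auto
      have "expn ?O L (blocks (layer_in G pV ys k) ?M) = expn ?O A' (map (\<lambda>x. (x, [])) (A @ I0)) @ expn ?O (r # B') ((r, N) # map (\<lambda>x. (x, [])) B)"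
        unfolding L bs using expn_app[OF fOA] by simp
      also have "\<dots> = A' @ r # N @ B'"
      proof -
        have "expn ?O A' (map (\<lambda>x. (x, [])) (A @ I0)) = A'" by (rule expn_nil[OF fOA]) auto
        moreover have "expn ?O B' (map (\<lambda>x. (x, [])) B) = B'" by (rule expn_nil[OF fOB]) auto
        ultimately show ?thesis using Or by simp
      qed
      finally show "filter ?O L = filter (layer_in G pV ys k) ?M \<and> expn ?O L (blocks (layer_in G pV ys k) ?M) = L'"
        using f1 unfolding L'_def by simp
    qed
    show ?thesis using INVk first second by blast
  qed
qed

end

context LD begin

lemma INV0: "INV 0 (filter (\<lambda>e. e \<in> Cc 0) (Ls 1))"
proof -
  have k: "1 \<le> (1::nat)" "1 \<le> n" using npos by auto
  let ?L = "filter (\<lambda>e. e \<in> Cc 0) (Ls 1)"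
  have d: "distinct ?L" using canon(1)[OF k] by simp
  have s: "set ?L = E 0" using canon(2)[OF k] LE[OF k] C0 by auto
  have nr: "\<not> edge_reach G x z" if "x \<in> E 0" "z \<in> E 0" for x z
  proof
    assume r: "edge_reach G x z"
    then have "hV (src G z) \<le> hV (tgt G x)" "x \<in> edges G" using reach_h by auto
    then show False using tgt_h[of x] that ys0 unfolding E_def by auto
  qed
  have P: "P12 (edge_reach G) ?L" unfolding P12_def
  proof (intro conjI allI impI)
    fix x z assume "edge_reach G x z" "x \<in> set ?L" "z \<in> set ?L"
    then show "list_prec ?L x z" using nr s by auto
  next
    fix x y z assume a: "list_prec ?L x y \<and> list_prec ?L y z \<and> edge_reach G x z"
    then have "x \<in> set ?L" "z \<in> set ?L" using prec_mem[of ?L x y] prec_mem[of ?L y z] by auto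
    then show "edge_reach G x y \<or> edge_reach G y z" using nr s a by auto
  qed
  have "sorted_wrt (\<lambda>e f. xt e (ys 0) < xt f (ys 0)) (filter (\<lambda>e. e \<in> Cc 0) ?L)"
    using in_sorted[OF k] by simp
  then show ?thesis unfolding INV_def using d s P by auto
qed

lemma main: "1 \<le> j \<Longrightarrow> j \<le> n \<Longrightarrow> \<exists>L. comp_upto Ls (layer_in G pV ys) (layer_out G pV ys) j = map (\<lambda>e. (e, e)) L \<and> INV j L"
proof (induction j)
  case 0 then show ?case by simp
next
  case (Suc j)
  show ?case
  proof (cases "j = 0")
    case True
    have k: "1 \<le> Suc 0" "Suc 0 \<le> n" using Suc.prems True by auto
    obtain L' where L': "INV (Suc 0) L'" "filter (\<lambda>e. e \<in> Cc 0) (Ls 1) = filter (\<lambda>e. e \<in> Cc 0) (Ls 1) \<longrightarrow> L' = Ls 1"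
      using step[OF k] INV0 by auto
    then show ?thesis using True by auto
  next
    case False
    then obtain L where L: "comp_upto Ls (layer_in G pV ys) (layer_out G pV ys) j = map (\<lambda>e. (e, e)) L" "INV j L"
      using Suc by auto
    have k: "1 \<le> Suc j" "Suc j \<le> n" using Suc.prems by auto
    have I: "INV (Suc j - 1) L" using L by simp
    obtain L' where L': "INV (Suc j) L'" "filter (layer_out G pV ys j) L = filter (layer_in G pV ys (Suc j)) (Ls (Suc j))"
      "expn (layer_out G pV ys j) L (blocks (layer_in G pV ys (Suc j)) (Ls (Suc j))) = L'"
      using step[OF k I] False by auto
    have fo: "filter (layer_out G pV ys j) L = map fst (blocks (layer_in G pV ys (Suc j)) (Ls (Suc j)))"
      using L'(2) blocks_fst by metis
    then have "comp_upto Ls (layer_in G pV ys) (layer_out G pV ys) (Suc j) = map (\<lambda>e. (e, e)) L'"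
      using comp_expn[OF fo] L(1) L'(3) False by simp
    then show ?thesis using L'(1) by blast
  qed
qed

lemma final: "planar_order G (phi_order G pV ys Ls n)"
proof -
  obtain L where L: "comp_upto Ls (layer_in G pV ys) (layer_out G pV ys) n = map (\<lambda>e. (e, e)) L" "INV n L"
    using main[of n] npos by auto
  have p: "phi_order G pV ys Ls n = L" unfolding phi_order_def L(1) by (simp add: comp_def)
  have d: "distinct L" "set L = edges G" "P12 (edge_reach G) L" using L(2) En unfolding INV_def by auto
  show ?thesis unfolding p planar_order_def using d reach_h unfolding P12_def by blast
qed

end

theorem proposition1p1:
  fixes G :: "('v, 'e) pgraph"
    and pV :: "'v \<Rightarrow> real \<times> real"
    and pE :: "'e \<Rightarrow> real \<Rightarrow> real \<times> real"
    and a b c d :: real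
    and ys :: "nat \<Rightarrow> real"
    and n :: nat
    and Ls :: "nat \<Rightarrow> 'e list"
  assumes "progressive_graph G"
    and "upward_BP_embedding G pV pE a b c d"
    and "layer_decomposition G pV c d ys n"
    and "\<forall>j \<in> {1..n}. canonical_layer_order G pV pE ys j (Ls j)"
  shows "planar_order G (phi_order G pV ys Ls n)"
proof -
  interpret LD G pV pE a b c d ys n Ls using assms by unfold_locales
  show ?thesis using final .
qed


end
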